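(* Let $\mu,\nu$ be the Gibbs distributions of two spin systems on the same graph $G=(V,E)$. Then $d_{TV}(\mu,\nu)\ge C\cdot d_{\mathrm{par}}(\mu,\nu)$, where: (1) for two hardcore models both satisfying the uniqueness condition, $C=\frac1{5000}$; (2) for two hardcore models both $b$-marginally bounded ($0<b<1$), $C=b^3$; (3) for two soft-Ising models both $b$-marginally bounded ($0<b<1$), $C=\frac{b^2}{2}$.
   Context: Hardcore model $(G,\lambda)$, $\lambda\in\mathbb{R}_{\ge0}^V$: weight on $\sigma\in\{-1,+1\}^V$ is $\prod_{v:\sigma_v=+1}\lambda_v$ if $\{v:\sigma_v=+1\}$ is independent, else $0$. Soft-Ising model $(G,J,h)$: $J\in\mathbb{R}^{V\times V}$ symmetric, $J_{uv}\ne0$ only for edges, $h\in\mathbb{R}^V$ (finite), weight $\exp(\sum_{\{u,v\}\in E}J_{uv}\sigma_u\sigma_v+\sum_vh_v\sigma_v)$. Gibbs distribution = normalized weight. Uniqueness condition: $\lambda_v\le(1-\eta)\lambda_c(\Delta)$ for all $v$ for some constant $\eta\in(0,1)$, where $\Delta\ge3$ is the maximum degree and $\lambda_c(\Delta)=\frac{(\Delta-1)^{\Delta-1}}{(\Delta-2)^\Delta}$. Parameter distance: for hardcore models, $d_{\mathrm{par}}(\mu,\nu)=\max_v|\lambda^\mu_v-\lambda^\nu_v|$; for soft-Ising models, $d_{\mathrm{par}}(\mu,\nu)=\max\{\max_{u,v}|J^\mu_{uv}-J^\nu_{uv}|,\ \max_v\frac{|h^\mu_v-h^\nu_v|}{\deg_v+1}\}$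 with $\deg_v$ the degree of $v$ in $G$. $b$-marginally bounded: for every $\Lambda\subseteq V$, feasible $\sigma\in\{\pm1\}^\Lambda$, $v\in V$, $c\in\{\pm1\}$, if $\mu^\sigma_v(c)>0$ then $\mu^\sigma_v(c)\ge b$ ($\mu^\sigma_v$ = marginal at $v$ of $\mu$ conditioned on $\sigma$). *)

theory Defs
  imports Complex_Main
begin

definition simple_graph :: "'v set \<Rightarrow> ('v \<Rightarrow> 'v \<Rightarrow> bool) \<Rightarrow> bool" where
  "simple_graph V E \<longleftrightarrow> finite V \<and> (\<forall>u v. E u v \<longrightarrow> u \<in> V \<and> v \<in> V)
     \<and> (\<forall>u v. E u v \<longrightarrow> E v u) \<and> (\<forall>v. \<not> E v v)"

definition deg :: "'v set \<Rightarrow> ('v \<Rightarrow> 'v \<Rightarrow> bool) \<Rightarrow> 'v \<Rightarrow> nat" where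
  "deg V E v = card {u \<in> V. E v u}"

definition max_deg :: "'v set \<Rightarrow> ('v \<Rightarrow> 'v \<Rightarrow> bool) \<Rightarrow> nat" where
  "max_deg V E = Max (insert 0 (deg V E ` V))"

definition configs :: "'v set \<Rightarrow> ('v \<Rightarrow> int) set" where
  "configs V = {\<sigma>. (\<forall>v\<in>V. \<sigma> v = 1 \<or> \<sigma> v = -1) \<and> (\<forall>v. v \<notin> V \<longrightarrow> \<sigma> v = 0)}"

definition hc_weight :: "'v set \<Rightarrow> ('v \<Rightarrow> 'v \<Rightarrow> bool) \<Rightarrow> ('v \<Rightarrow> real) \<Rightarrow> ('v \<Rightarrow> int) \<Rightarrow> real" where
  "hc_weight V E lam \<sigma> =
     (if (\<forall>u\<in>V. \<forall>v\<in>V. E u v \<longrightarrow> \<not> (\<sigma> u = 1 \<and> \<sigma> v = 1))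
      then (\<Prod>v\<in>{v\<in>V. \<sigma> v = 1}. lam v) else 0)"

text \<open>Sum over unordered edges {u,v} written as half the sum over ordered adjacent pairs
  (J is symmetric).\<close>
definition ising_weight :: "'v set \<Rightarrow> ('v \<Rightarrow> 'v \<Rightarrow> bool) \<Rightarrow> ('v \<Rightarrow> 'v \<Rightarrow> real) \<Rightarrow> ('v \<Rightarrow> real)
     \<Rightarrow> ('v \<Rightarrow> int) \<Rightarrow> real" where
  "ising_weight V E J h \<sigma> =
     exp ((\<Sum>u\<in>V. \<Sum>v\<in>{v\<in>V. E u v}. J u v * of_int (\<sigma> u) * of_int (\<sigma> v)) / 2
          + (\<Sum>v\<in>V. h v * of_int (\<sigma> v)))"

definition gibbs :: "'v set \<Rightarrow> (('v \<Rightarrow> int) \<Rightarrow> real) \<Rightarrow> ('v \<Rightarrow> int) \<Rightarrow> real" where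
  "gibbs V w \<sigma> = (if \<sigma> \<in> configs V then w \<sigma> / (\<Sum>\<tau>\<in>configs V. w \<tau>) else 0)"

definition hardcore_gibbs where
  "hardcore_gibbs V E lam = gibbs V (hc_weight V E lam)"

definition ising_gibbs where
  "ising_gibbs V E J h = gibbs V (ising_weight V E J h)"

definition dtv :: "'v set \<Rightarrow> (('v \<Rightarrow> int) \<Rightarrow> real) \<Rightarrow> (('v \<Rightarrow> int) \<Rightarrow> real) \<Rightarrow> real" where
  "dtv V \<mu> \<nu> = (\<Sum>\<sigma>\<in>configs V. \<bar>\<mu> \<sigma> - \<nu> \<sigma>\<bar>) / 2"

definition hardcore_model where
  "hardcore_model V E lam \<longleftrightarrow> simple_graph V E \<and> (\<forall>v\<in>V. lam v \<ge> 0)"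

definition soft_ising_model where
  "soft_ising_model V E J h \<longleftrightarrow> simple_graph V E \<and> (\<forall>u v. J u v = J v u)
     \<and> (\<forall>u v. J u v \<noteq> 0 \<longrightarrow> E u v)"

definition lambda_c :: "nat \<Rightarrow> real" where
  "lambda_c D = (real D - 1) ^ (D - 1) / (real D - 2) ^ D"

definition uniqueness :: "'v set \<Rightarrow> ('v \<Rightarrow> 'v \<Rightarrow> bool) \<Rightarrow> ('v \<Rightarrow> real) \<Rightarrow> bool" where
  "uniqueness V E lam \<longleftrightarrow> (\<exists>\<eta>::real. 0 < \<eta> \<and> \<eta> < 1 \<and>
      (\<forall>v\<in>V. lam v \<le> (1 - \<eta>) * lambda_c (max_deg V E)))"

definition dpar_hc :: "'v set \<Rightarrow> ('v \<Rightarrow> real) \<Rightarrow> ('v \<Rightarrow> real) \<Rightarrow> real" where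
  "dpar_hc V lam1 lam2 = Max (insert 0 ((\<lambda>v. \<bar>lam1 v - lam2 v\<bar>) ` V))"

definition dpar_ising :: "'v set \<Rightarrow> ('v \<Rightarrow> 'v \<Rightarrow> bool) \<Rightarrow> ('v \<Rightarrow> 'v \<Rightarrow> real) \<Rightarrow> ('v \<Rightarrow> real)
     \<Rightarrow> ('v \<Rightarrow> 'v \<Rightarrow> real) \<Rightarrow> ('v \<Rightarrow> real) \<Rightarrow> real" where
  "dpar_ising V E J1 h1 J2 h2 =
     max (Max (insert 0 ((\<lambda>(u,v). \<bar>J1 u v - J2 u v\<bar>) ` (V \<times> V))))
         (Max (insert 0 ((\<lambda>v. \<bar>h1 v - h2 v\<bar> / (real (deg V E v) + 1)) ` V)))"

definition prob_ev :: "'v set \<Rightarrow> (('v \<Rightarrow> int) \<Rightarrow> real) \<Rightarrow> (('v \<Rightarrow> int) \<Rightarrow> bool) \<Rightarrow> real" where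
  "prob_ev V \<mu> A = (\<Sum>\<tau>\<in>{\<tau>\<in>configs V. A \<tau>}. \<mu> \<tau>)"

definition marg_bounded :: "'v set \<Rightarrow> (('v \<Rightarrow> int) \<Rightarrow> real) \<Rightarrow> real \<Rightarrow> bool" where
  "marg_bounded V \<mu> b \<longleftrightarrow>
     (\<forall>\<Lambda> \<sigma> v c. \<Lambda> \<subseteq> V \<longrightarrow> (\<forall>u\<in>\<Lambda>. \<sigma> u = 1 \<or> \<sigma> u = -1) \<longrightarrow>
        prob_ev V \<mu> (\<lambda>\<tau>. \<forall>u\<in>\<Lambda>. \<tau> u = \<sigma> u) > 0 \<longrightarrow> v \<in> V \<longrightarrow> (c = 1 \<or> c = -1) \<longrightarrow>
        (let p = prob_ev V \<mu> (\<lambda>\<tau>. (\<forall>u\<in>\<Lambda>. \<tau> u = \<sigma> u) \<and> \<tau> v = c)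
                 / prob_ev V \<mu> (\<lambda>\<tau>. \<forall>u\<in>\<Lambda>. \<tau> u = \<sigma> u)
         in p > 0 \<longrightarrow> p \<ge> b))"

end

theory Submission
  imports Defs
begin


lemma configs_finite: "finite V \<Longrightarrow> finite (configs V)"
  unfolding configs_def
  by (rule finite_subset[OF _ finite_set_of_finite_funs[of V "{-1,1}" 0]]) auto

lemma configs_val: "\<sigma> \<in> configs V \<Longrightarrow> x \<in> V \<Longrightarrow> \<sigma> x \<noteq> 1 \<longleftrightarrow> \<sigma> x = -1"
  unfolding configs_def by auto

lemma configs_upd: "\<sigma> \<in> configs V \<Longrightarrow> u \<in> V \<Longrightarrow> c = 1 \<or> c = -1 \<Longrightarrow> \<sigma>(u:=c) \<in> configs V"
  unfolding configs_def by auto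

lemma reindex_flip:
  assumes u: "u \<in> V" and P: "\<And>\<sigma> c. P (\<sigma>(u:=c)) = P \<sigma>"
  shows "(\<Sum>\<sigma>\<in>{\<sigma>\<in>configs V. P \<sigma> \<and> \<sigma> u = 1}. g \<sigma>) = (\<Sum>\<sigma>\<in>{\<sigma>\<in>configs V. P \<sigma> \<and> \<sigma> u = -1}. g (\<sigma>(u:=1)))"
proof (rule sum.reindex_bij_witness[where i="\<lambda>\<sigma>. \<sigma>(u:=1)" and j="\<lambda>\<sigma>. \<sigma>(u:=-1)"])
  fix a assume a: "a \<in> {\<sigma>\<in>configs V. P \<sigma> \<and> \<sigma> u = 1}"
  then show "a(u := -1, u := 1) = a" by auto
  show "a(u := -1) \<in> {\<sigma>\<in>configs V. P \<sigma> \<and> \<sigma> u = -1}" using a u P configs_upd[of a V u "-1"] by auto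
  show "g (a(u := -1, u := 1)) = g a" using a by (simp add: fun_upd_idem)
next
  fix b assume b: "b \<in> {\<sigma>\<in>configs V. P \<sigma> \<and> \<sigma> u = -1}"
  then show "b(u := 1, u := -1) = b" by auto
  show "b(u := 1) \<in> {\<sigma>\<in>configs V. P \<sigma> \<and> \<sigma> u = 1}" using b u P configs_upd[of b V u 1] by auto
qed

lemma hc_nonneg: "hardcore_model V E lam \<Longrightarrow> hc_weight V E lam \<sigma> \<ge> 0"
  unfolding hc_weight_def hardcore_model_def by (auto intro: prod_nonneg)

lemma hc_flip:
  assumes sg: "simple_graph V E" and \<sigma>: "\<sigma> \<in> configs V" and u: "u \<in> V" "\<sigma> u = -1"
  shows "hc_weight V E lam (\<sigma>(u:=1)) = (if (\<forall>x\<in>V. E u x \<longrightarrow> \<sigma> x \<noteq> 1) then lam u * hc_weight V E lam \<sigma> else 0)"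
proof (cases "\<forall>x\<in>V. E u x \<longrightarrow> \<sigma> x \<noteq> 1")
  case True
  have fin: "finite V" using sg simple_graph_def by auto
  have I: "(\<forall>a\<in>V. \<forall>b\<in>V. E a b \<longrightarrow> \<not> ((\<sigma>(u:=1)) a = 1 \<and> (\<sigma>(u:=1)) b = 1)) \<longleftrightarrow>
           (\<forall>a\<in>V. \<forall>b\<in>V. E a b \<longrightarrow> \<not> (\<sigma> a = 1 \<and> \<sigma> b = 1))"
    using True u sg unfolding simple_graph_def by (auto) metis+
  have S: "{x\<in>V. (\<sigma>(u:=1)) x = 1} = insert u {x\<in>V. \<sigma> x = 1}" using u by auto
  have "(\<Prod>x\<in>{x\<in>V. (\<sigma>(u:=1)) x = 1}. lam x) = lam u * (\<Prod>x\<in>{x\<in>V. \<sigma> x = 1}. lam x)"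
    unfolding S using fin u by (subst prod.insert) auto
  then show ?thesis using True I unfolding hc_weight_def by auto
next
  case False
  then obtain x where x: "x \<in> V" "E u x" "\<sigma> x = 1" by auto
  then have "x \<noteq> u" using u by auto
  then have "\<exists>a\<in>V. \<exists>b\<in>V. E a b \<and> ((\<sigma>(u:=1)) a = 1 \<and> (\<sigma>(u:=1)) b = 1)"
    using x u by (intro bexI[of _ u] bexI[of _ x]) auto
  then have nI: "\<not> (\<forall>a\<in>V. \<forall>b\<in>V. E a b \<longrightarrow> \<not> ((\<sigma>(u:=1)) a = 1 \<and> (\<sigma>(u:=1)) b = 1))" by blast
  have hz: "hc_weight V E lam (\<sigma>(u:=1)) = 0" unfolding hc_weight_def using nI by (rule if_not_P)
  show ?thesis by (simp only: if_not_P[OF False] hz)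
qed

lemma sg_finite: "simple_graph V E \<Longrightarrow> finite V" unfolding simple_graph_def by auto

lemma hc_step:
  assumes hm: "hardcore_model V E lam" and u: "u \<in> V" and P: "\<And>\<sigma> c. P (\<sigma>(u:=c)) = P \<sigma>"
  shows "(\<Sum>\<sigma>\<in>{\<sigma>\<in>configs V. P \<sigma>}. hc_weight V E lam \<sigma>)
     \<le> (1 + lam u) * (\<Sum>\<sigma>\<in>{\<sigma>\<in>configs V. P \<sigma> \<and> \<sigma> u = -1}. hc_weight V E lam \<sigma>)"
proof -
  have sg: "simple_graph V E" and lam0: "lam u \<ge> 0" using hm u unfolding hardcore_model_def by auto
  have fin: "finite (configs V)" using configs_finite sg_finite[OF sg] by blast
  have split: "{\<sigma>\<in>configs V. P \<sigma>} = {\<sigma>\<in>configs V. P \<sigma> \<and> \<sigma> u = 1} \<union> {\<sigma>\<in>configs V. P \<sigma> \<and> \<sigma> u = -1}"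
    using u unfolding configs_def by auto
  have "(\<Sum>\<sigma>\<in>{\<sigma>\<in>configs V. P \<sigma>}. hc_weight V E lam \<sigma>)
     = (\<Sum>\<sigma>\<in>{\<sigma>\<in>configs V. P \<sigma> \<and> \<sigma> u = 1}. hc_weight V E lam \<sigma>) + (\<Sum>\<sigma>\<in>{\<sigma>\<in>configs V. P \<sigma> \<and> \<sigma> u = -1}. hc_weight V E lam \<sigma>)"
    unfolding split by (rule sum.union_disjoint) (use fin in auto)
  also have "(\<Sum>\<sigma>\<in>{\<sigma>\<in>configs V. P \<sigma> \<and> \<sigma> u = 1}. hc_weight V E lam \<sigma>)
      = (\<Sum>\<sigma>\<in>{\<sigma>\<in>configs V. P \<sigma> \<and> \<sigma> u = -1}. hc_weight V E lam (\<sigma>(u:=1)))"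
    by (rule reindex_flip[OF u P])
  also have "\<dots> \<le> (\<Sum>\<sigma>\<in>{\<sigma>\<in>configs V. P \<sigma> \<and> \<sigma> u = -1}. lam u * hc_weight V E lam \<sigma>)"
  proof (rule sum_mono)
    fix \<sigma> assume "\<sigma> \<in> {\<sigma>\<in>configs V. P \<sigma> \<and> \<sigma> u = -1}"
    then show "hc_weight V E lam (\<sigma>(u:=1)) \<le> lam u * hc_weight V E lam \<sigma>"
      using hc_flip[OF sg _ u, of \<sigma> lam] hc_nonneg[OF hm, of \<sigma>] lam0 by auto
  qed
  finally have z: "(\<Sum>\<sigma>\<in>{\<sigma>\<in>configs V. P \<sigma>}. hc_weight V E lam \<sigma>) \<le> (\<Sum>\<sigma>\<in>{\<sigma>\<in>configs V. P \<sigma> \<and> \<sigma> u = -1}. hc_weight V E lam \<sigma>) + (\<Sum>\<sigma>\<in>{\<sigma>\<in>configs V. P \<sigma> \<and> \<sigma> u = -1}. lam u * hc_weight V E lam \<sigma>)" by simp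
  moreover have "(\<Sum>\<sigma>\<in>{\<sigma>\<in>configs V. P \<sigma> \<and> \<sigma> u = -1}. lam u * hc_weight V E lam \<sigma>) = lam u * (\<Sum>\<sigma>\<in>{\<sigma>\<in>configs V. P \<sigma> \<and> \<sigma> u = -1}. hc_weight V E lam \<sigma>)" by (simp add: sum_distrib_left)
  ultimately show ?thesis by (simp add: distrib_right)
qed

lemma hc_Z_bound:
  assumes hm: "hardcore_model V E lam" and S: "S \<subseteq> V"
  shows "(\<Sum>\<sigma>\<in>configs V. hc_weight V E lam \<sigma>)
     \<le> (\<Prod>u\<in>S. 1 + lam u) * (\<Sum>\<sigma>\<in>{\<sigma>\<in>configs V. \<forall>x\<in>S. \<sigma> x = -1}. hc_weight V E lam \<sigma>)"
proof -
  have fV: "finite V" using hm sg_finite unfolding hardcore_model_def by blast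
  have "finite S" using S fV finite_subset by blast
  then show ?thesis using S
  proof (induction S rule: finite_induct)
    case empty
    then show ?case by simp
  next
    case (insert u S)
    have IH: "(\<Sum>\<sigma>\<in>configs V. hc_weight V E lam \<sigma>)
     \<le> (\<Prod>u\<in>S. 1 + lam u) * (\<Sum>\<sigma>\<in>{\<sigma>\<in>configs V. \<forall>x\<in>S. \<sigma> x = -1}. hc_weight V E lam \<sigma>)"
      using insert by auto
    have uV: "u \<in> V" using insert by auto
    have st: "(\<Sum>\<sigma>\<in>{\<sigma>\<in>configs V. \<forall>x\<in>S. \<sigma> x = -1}. hc_weight V E lam \<sigma>)
     \<le> (1 + lam u) * (\<Sum>\<sigma>\<in>{\<sigma>\<in>configs V. (\<forall>x\<in>S. \<sigma> x = -1) \<and> \<sigma> u = -1}. hc_weight V E lam \<sigma>)"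
      by (rule hc_step[OF hm uV]) (use insert in auto)
    have eq: "{\<sigma>\<in>configs V. (\<forall>x\<in>S. \<sigma> x = -1) \<and> \<sigma> u = -1} = {\<sigma>\<in>configs V. \<forall>x\<in>insert u S. \<sigma> x = -1}"
      by auto
    have p0: "(\<Prod>u\<in>S. 1 + lam u) \<ge> 0"
      using insert hm unfolding hardcore_model_def by (intro prod_nonneg) auto
    have "(\<Sum>\<sigma>\<in>configs V. hc_weight V E lam \<sigma>) \<le> (\<Prod>u\<in>S. 1 + lam u) * ((1 + lam u) *
       (\<Sum>\<sigma>\<in>{\<sigma>\<in>configs V. \<forall>x\<in>insert u S. \<sigma> x = -1}. hc_weight V E lam \<sigma>))"
      using IH mult_left_mono[OF st p0] eq by simp
    then show ?case using insert by (simp add: algebra_simps)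
  qed
qed

lemma hc_identity:
  assumes hm: "hardcore_model V E lam" and v: "v \<in> V"
  shows "(\<Sum>\<sigma>\<in>{\<sigma>\<in>configs V. \<sigma> v = 1}. hc_weight V E lam \<sigma>)
     = lam v * (\<Sum>\<sigma>\<in>{\<sigma>\<in>configs V. (\<forall>x\<in>{u\<in>V. E v u}. \<sigma> x = -1) \<and> \<sigma> v = -1}. hc_weight V E lam \<sigma>)"
proof -
  have sg: "simple_graph V E" using hm unfolding hardcore_model_def by auto
  have fin: "finite (configs V)" using configs_finite sg_finite[OF sg] by blast
  have "(\<Sum>\<sigma>\<in>{\<sigma>\<in>configs V. \<sigma> v = 1}. hc_weight V E lam \<sigma>)
      = (\<Sum>\<sigma>\<in>{\<sigma>\<in>configs V. \<sigma> v = -1}. hc_weight V E lam (\<sigma>(v:=1)))"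
    using reindex_flip[OF v, of "\<lambda>_. True"] by simp
  also have "\<dots> = (\<Sum>\<sigma>\<in>{\<sigma>\<in>configs V. \<sigma> v = -1}.
       if (\<forall>x\<in>{u\<in>V. E v u}. \<sigma> x = -1) then lam v * hc_weight V E lam \<sigma> else 0)"
  proof (rule sum.cong[OF refl])
    fix \<sigma> assume s: "\<sigma> \<in> {\<sigma>\<in>configs V. \<sigma> v = -1}"
    have "(\<forall>x\<in>V. E v x \<longrightarrow> \<sigma> x \<noteq> 1) = (\<forall>x\<in>{u\<in>V. E v u}. \<sigma> x = -1)"
      using s configs_val[of \<sigma> V] by auto
    then show "hc_weight V E lam (\<sigma>(v:=1)) = (if (\<forall>x\<in>{u\<in>V. E v u}. \<sigma> x = -1) then lam v * hc_weight V E lam \<sigma> else 0)"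
      using hc_flip[OF sg _ v, of \<sigma> lam] s by auto
  qed
  also have "\<dots> = (\<Sum>\<sigma>\<in>{\<sigma>\<in>{\<sigma>\<in>configs V. \<sigma> v = -1}. \<forall>x\<in>{u\<in>V. E v u}. \<sigma> x = -1}. lam v * hc_weight V E lam \<sigma>)"
    by (rule sum.inter_filter[symmetric]) (use fin in auto)
  also have "{\<sigma>\<in>{\<sigma>\<in>configs V. \<sigma> v = -1}. \<forall>x\<in>{u\<in>V. E v u}. \<sigma> x = -1}
       = {\<sigma>\<in>configs V. (\<forall>x\<in>{u\<in>V. E v u}. \<sigma> x = -1) \<and> \<sigma> v = -1}" by auto
  finally show ?thesis by (simp add: sum_distrib_left)
qed

definition allm :: "'v set \<Rightarrow> 'v \<Rightarrow> int" where "allm V = (\<lambda>x. if x \<in> V then -1 else 0)"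

lemma allm_configs: "allm V \<in> configs V" unfolding allm_def configs_def by auto

lemma hc_allm: "hc_weight V E lam (allm V) = 1"
  unfolding hc_weight_def allm_def by auto

lemma hc_Z_pos:
  assumes hm: "hardcore_model V E lam"
  shows "(\<Sum>\<sigma>\<in>configs V. hc_weight V E lam \<sigma>) \<ge> 1"
proof -
  have sg: "simple_graph V E" using hm unfolding hardcore_model_def by auto
  have fin: "finite (configs V)" using configs_finite sg_finite[OF sg] by blast
  have "hc_weight V E lam (allm V) \<le> (\<Sum>\<sigma>\<in>configs V. hc_weight V E lam \<sigma>)"
    by (rule member_le_sum) (use allm_configs hc_nonneg[OF hm] fin in auto)
  then show ?thesis using hc_allm by metis
qed

lemma gibbs_sum:
  assumes "A \<subseteq> configs V"
  shows "(\<Sum>\<sigma>\<in>A. gibbs V w \<sigma>) = (\<Sum>\<sigma>\<in>A. w \<sigma>) / (\<Sum>\<tau>\<in>configs V. w \<tau>)"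
proof -
  have "(\<Sum>\<sigma>\<in>A. gibbs V w \<sigma>) = (\<Sum>\<sigma>\<in>A. w \<sigma> / (\<Sum>\<tau>\<in>configs V. w \<tau>))"
    by (rule sum.cong[OF refl]) (use assms in \<open>auto simp: gibbs_def\<close>)
  then show ?thesis by (simp add: sum_divide_distrib)
qed

lemma gibbs_total:
  assumes "(\<Sum>\<tau>\<in>configs V. w \<tau>) \<noteq> 0"
  shows "(\<Sum>\<sigma>\<in>configs V. gibbs V w \<sigma>) = 1"
  using gibbs_sum[of "configs V" V w] assms by simp

lemma gibbs_nonneg:
  assumes "\<And>\<sigma>. w \<sigma> \<ge> 0"
  shows "gibbs V w \<sigma> \<ge> 0"
  unfolding gibbs_def using assms by (auto intro!: divide_nonneg_nonneg sum_nonneg)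

lemma dtv_test:
  assumes fin: "finite (configs V)" and g: "\<And>\<sigma>. \<sigma> \<in> configs V \<Longrightarrow> \<bar>g \<sigma>\<bar> \<le> 1"
  shows "\<bar>\<Sum>\<sigma>\<in>configs V. (\<mu> \<sigma> - \<nu> \<sigma>) * g \<sigma>\<bar> \<le> 2 * dtv V \<mu> \<nu>"
proof -
  have "\<bar>\<Sum>\<sigma>\<in>configs V. (\<mu> \<sigma> - \<nu> \<sigma>) * g \<sigma>\<bar> \<le> (\<Sum>\<sigma>\<in>configs V. \<bar>(\<mu> \<sigma> - \<nu> \<sigma>) * g \<sigma>\<bar>)"
    by (rule sum_abs)
  also have "\<dots> \<le> (\<Sum>\<sigma>\<in>configs V. \<bar>\<mu> \<sigma> - \<nu> \<sigma>\<bar>)"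
  proof (rule sum_mono)
    fix \<sigma> assume "\<sigma> \<in> configs V"
    then have "\<bar>g \<sigma>\<bar> \<le> 1" using g by auto
    then show "\<bar>(\<mu> \<sigma> - \<nu> \<sigma>) * g \<sigma>\<bar> \<le> \<bar>\<mu> \<sigma> - \<nu> \<sigma>\<bar>"
      by (simp add: abs_mult mult_left_le)
  qed
  finally show ?thesis unfolding dtv_def by simp
qed

lemma dtv_event:
  assumes fin: "finite (configs V)" and A: "A \<subseteq> configs V"
    and s1: "(\<Sum>\<sigma>\<in>configs V. \<mu> \<sigma>) = 1" and s2: "(\<Sum>\<sigma>\<in>configs V. \<nu> \<sigma>) = 1"
  shows "\<bar>(\<Sum>\<sigma>\<in>A. \<mu> \<sigma>) - (\<Sum>\<sigma>\<in>A. \<nu> \<sigma>)\<bar> \<le> dtv V \<mu> \<nu>"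
proof -
  let ?g = "\<lambda>\<sigma>. if \<sigma> \<in> A then 1 else (-1::real)"
  have t: "\<bar>\<Sum>\<sigma>\<in>configs V. (\<mu> \<sigma> - \<nu> \<sigma>) * ?g \<sigma>\<bar> \<le> 2 * dtv V \<mu> \<nu>"
    by (rule dtv_test[OF fin]) auto
  have fA: "finite A" using fin A finite_subset by blast
  have C: "configs V = A \<union> (configs V - A)" using A by auto
  have "(\<Sum>\<sigma>\<in>configs V. (\<mu> \<sigma> - \<nu> \<sigma>) * ?g \<sigma>) = (\<Sum>\<sigma>\<in>A. (\<mu> \<sigma> - \<nu> \<sigma>) * ?g \<sigma>) + (\<Sum>\<sigma>\<in>configs V - A. (\<mu> \<sigma> - \<nu> \<sigma>) * ?g \<sigma>)"
    by (subst C, rule sum.union_disjoint) (use fin fA in auto)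
  also have "\<dots> = (\<Sum>\<sigma>\<in>A. (\<mu> \<sigma> - \<nu> \<sigma>)) - (\<Sum>\<sigma>\<in>configs V - A. (\<mu> \<sigma> - \<nu> \<sigma>))"
    by (simp add: sum_negf[symmetric])
  finally have e1: "(\<Sum>\<sigma>\<in>configs V. (\<mu> \<sigma> - \<nu> \<sigma>) * ?g \<sigma>) = (\<Sum>\<sigma>\<in>A. (\<mu> \<sigma> - \<nu> \<sigma>)) - (\<Sum>\<sigma>\<in>configs V - A. (\<mu> \<sigma> - \<nu> \<sigma>))" .
  have "(\<Sum>\<sigma>\<in>configs V. (\<mu> \<sigma> - \<nu> \<sigma>)) = (\<Sum>\<sigma>\<in>A. (\<mu> \<sigma> - \<nu> \<sigma>)) + (\<Sum>\<sigma>\<in>configs V - A. (\<mu> \<sigma> - \<nu> \<sigma>))"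
    by (subst C, rule sum.union_disjoint) (use fin fA in auto)
  moreover have "(\<Sum>\<sigma>\<in>configs V. (\<mu> \<sigma> - \<nu> \<sigma>)) = 0" using s1 s2 by (simp add: sum_subtractf)
  ultimately have "(\<Sum>\<sigma>\<in>configs V. (\<mu> \<sigma> - \<nu> \<sigma>) * ?g \<sigma>) = 2 * (\<Sum>\<sigma>\<in>A. (\<mu> \<sigma> - \<nu> \<sigma>))"
    using e1 by linarith
  then show ?thesis using t by (simp add: sum_subtractf)
qed




lemma lc_large:
  fixes k :: nat assumes k: "k \<ge> 5"
  shows "(1 + lambda_c (k+2)) ^ (k+4) \<le> 5000"
proof -
  define x where "x = real k"
  have x5: "x \<ge> 5" using k x_def by simp
  have lc: "lambda_c (k+2) = (x+1)^(k+1) / x^(k+2)"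
    unfolding lambda_c_def x_def by (simp add: add.commute)
  also have "\<dots> = (1/x) * (1 + 1/x) * (1 + 1/x)^k"
    using x5 by (simp add: field_simps power_add power_divide)
  finally have lce: "lambda_c (k+2) = (1/x) * (1 + 1/x) * (1 + 1/x)^k" .
  have "(1 + 1/x)^k \<le> exp (1/x) ^ k"
    by (rule power_mono) (use x5 in auto)
  also have "\<dots> = exp (real k * (1/x))" by (simp only: exp_of_nat_mult)
  also have "\<dots> = exp 1" using x5 x_def by simp
  finally have pk: "(1 + 1/x)^k \<le> exp 1" .
  have c0: "0 \<le> (1/x) * (1 + 1/x)" using x5 by simp
  have lcb: "lambda_c (k+2) \<le> (1/x) * (1 + 1/x) * 3"
    unfolding lce using mult_left_mono[OF order.trans[OF pk exp_le] c0] .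
  have lc0: "lambda_c (k+2) \<ge> 0" unfolding lce using x5 by simp
  have "(1 + lambda_c (k+2)) ^ (k+4) \<le> exp (lambda_c (k+2)) ^ (k+4)"
    by (rule power_mono) (use lc0 in auto)
  also have "\<dots> = exp (real (k+4) * lambda_c (k+2))" by (simp only: exp_of_nat_mult)
  also have "\<dots> \<le> exp 7"
  proof -
    have r: "real (k+4) = x + 4" using x_def by simp
    have "(x+4) * ((1/x) * (1 + 1/x) * 3) = 3 * (x+4)*(x+1)/x^2"
      using x5 by (simp add: field_simps power2_eq_square)
    also have "\<dots> \<le> 7"
    proof -
      have "(x-5)*(4*x+5) \<ge> 0" using x5 by simp
      then have "3*(x+4)*(x+1) \<le> 7 * x^2" by (simp add: algebra_simps power2_eq_square)
      then show ?thesis using x5 by (simp add: divide_le_eq)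
    qed
    finally have "(x+4) * lambda_c (k+2) \<le> 7"
      using mult_left_mono[OF lcb, of "x+4"] x5 by linarith
    then show ?thesis using r by simp
  qed
  also have "\<dots> = exp 1 ^ 7" using exp_of_nat_mult[of 7 1] by simp
  also have "\<dots> \<le> 3 ^ 7" by (rule power_mono) (use exp_le in auto)
  finally show ?thesis by simp
qed

lemma lc_bound:
  assumes D: "D \<ge> 3"
  shows "(1 + lambda_c D) ^ (D+2) \<le> 5000 \<and> lambda_c D \<ge> 0"
proof -
  have nn: "lambda_c D \<ge> 0" unfolding lambda_c_def using D by simp
  have "D = 3 \<or> D = 4 \<or> D = 5 \<or> D = 6 \<or> D \<ge> 7" using D by linarith
  then have "(1 + lambda_c D) ^ (D+2) \<le> 5000"
  proof (elim disjE)
    assume "D \<ge> 7"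
    then obtain k where k: "D = k + 2" "k \<ge> 5" by (intro that[of "D - 2"]) auto
    have "k + 4 = D + 2" using k by simp
    then show ?thesis using lc_large[OF k(2)] k(1) by metis
  next
    assume "D = 3" then show ?thesis by (simp add: lambda_c_def power_divide)
  next
    assume "D = 4" then show ?thesis by (simp add: lambda_c_def power_divide)
  next
    assume "D = 5" then show ?thesis by (simp add: lambda_c_def power_divide)
  next
    assume "D = 6" then show ?thesis by (simp add: lambda_c_def power_divide)
  qed
  then show ?thesis using nn by simp
qed




lemma dtv_nonneg: "dtv V \<mu> \<nu> \<ge> 0" unfolding dtv_def by (simp add: sum_nonneg)

lemma dtv_sym: "dtv V \<mu> \<nu> = dtv V \<nu> \<mu>" unfolding dtv_def by (simp add: abs_minus_commute)

lemma hc_basic: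
  assumes hm: "hardcore_model V E lam"
  shows "finite (configs V)" "(\<Sum>\<sigma>\<in>configs V. hardcore_gibbs V E lam \<sigma>) = 1"
    "\<And>\<sigma>. hardcore_gibbs V E lam \<sigma> \<ge> 0"
    "\<And>A. A \<subseteq> configs V \<Longrightarrow> (\<Sum>\<sigma>\<in>A. hardcore_gibbs V E lam \<sigma>) = (\<Sum>\<sigma>\<in>A. hc_weight V E lam \<sigma>) / (\<Sum>\<tau>\<in>configs V. hc_weight V E lam \<tau>)"
proof -
  have sg: "simple_graph V E" using hm unfolding hardcore_model_def by auto
  show "finite (configs V)" using configs_finite sg_finite[OF sg] by blast
  show "(\<Sum>\<sigma>\<in>configs V. hardcore_gibbs V E lam \<sigma>) = 1"
    unfolding hardcore_gibbs_def by (rule gibbs_total) (use hc_Z_pos[OF hm] in auto)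
  show "\<And>\<sigma>. hardcore_gibbs V E lam \<sigma> \<ge> 0"
    unfolding hardcore_gibbs_def by (rule gibbs_nonneg) (use hc_nonneg[OF hm] in auto)
  show "\<And>A. A \<subseteq> configs V \<Longrightarrow> (\<Sum>\<sigma>\<in>A. hardcore_gibbs V E lam \<sigma>) = (\<Sum>\<sigma>\<in>A. hc_weight V E lam \<sigma>) / (\<Sum>\<tau>\<in>configs V. hc_weight V E lam \<tau>)"
    unfolding hardcore_gibbs_def by (rule gibbs_sum)
qed

lemma hc_identity_gibbs:
  assumes hm: "hardcore_model V E lam" and v: "v \<in> V"
  shows "(\<Sum>\<sigma>\<in>{\<sigma>\<in>configs V. \<sigma> v = 1}. hardcore_gibbs V E lam \<sigma>)
     = lam v * (\<Sum>\<sigma>\<in>{\<sigma>\<in>configs V. (\<forall>x\<in>{u\<in>V. E v u}. \<sigma> x = -1) \<and> \<sigma> v = -1}. hardcore_gibbs V E lam \<sigma>)"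
  using hc_identity[OF hm v] hc_basic(4)[OF hm, of "{\<sigma>\<in>configs V. \<sigma> v = 1}"]
    hc_basic(4)[OF hm, of "{\<sigma>\<in>configs V. (\<forall>x\<in>{u\<in>V. E v u}. \<sigma> x = -1) \<and> \<sigma> v = -1}"]
  by auto

lemma hc_main:
  assumes hm1: "hardcore_model V E lam1" and hm2: "hardcore_model V E lam2" and v: "v \<in> V"
  shows "(lam1 v - lam2 v) * (\<Sum>\<sigma>\<in>{\<sigma>\<in>configs V. (\<forall>x\<in>{u\<in>V. E v u}. \<sigma> x = -1) \<and> \<sigma> v = -1}. hardcore_gibbs V E lam1 \<sigma>)
      \<le> (1 + lam2 v) * dtv V (hardcore_gibbs V E lam1) (hardcore_gibbs V E lam2)"
proof -
  let ?B = "{\<sigma>\<in>configs V. (\<forall>x\<in>{u\<in>V. E v u}. \<sigma> x = -1) \<and> \<sigma> v = -1}"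
  let ?A = "{\<sigma>\<in>configs V. \<sigma> v = 1}"
  let ?m1 = "hardcore_gibbs V E lam1" and ?m2 = "hardcore_gibbs V E lam2"
  let ?d = "dtv V ?m1 ?m2"
  define a1 where "a1 = (\<Sum>\<sigma>\<in>?A. ?m1 \<sigma>)"
  define a2 where "a2 = (\<Sum>\<sigma>\<in>?A. ?m2 \<sigma>)"
  define b1 where "b1 = (\<Sum>\<sigma>\<in>?B. ?m1 \<sigma>)"
  define b2 where "b2 = (\<Sum>\<sigma>\<in>?B. ?m2 \<sigma>)"
  have i1: "a1 = lam1 v * b1" unfolding a1_def b1_def by (rule hc_identity_gibbs[OF hm1 v])
  have i2: "a2 = lam2 v * b2" unfolding a2_def b2_def by (rule hc_identity_gibbs[OF hm2 v])
  have dA: "\<bar>a1 - a2\<bar> \<le> ?d" unfolding a1_def a2_def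
    by (rule dtv_event) (use hc_basic[OF hm1] hc_basic[OF hm2] in auto)
  have dB: "\<bar>b1 - b2\<bar> \<le> ?d" unfolding b1_def b2_def
    by (rule dtv_event) (use hc_basic[OF hm1] hc_basic[OF hm2] in auto)
  have l2: "lam2 v \<ge> 0" using hm2 v unfolding hardcore_model_def by auto
  have "lam2 v * (b2 - b1) \<le> lam2 v * ?d"
    by (rule mult_left_mono) (use dB l2 in auto)
  moreover have "(lam1 v - lam2 v) * b1 = (a1 - a2) + lam2 v * (b2 - b1)" using i1 i2 by (simp add: algebra_simps)
  ultimately show ?thesis using dA unfolding b1_def by (simp add: algebra_simps)
qed




lemma allm_minus: "\<sigma> \<in> configs V \<Longrightarrow> N \<subseteq> V \<Longrightarrow> (\<forall>u\<in>N. \<sigma> u = allm V u) = (\<forall>u\<in>N. \<sigma> u = -1)"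
  unfolding allm_def by auto

lemma hc_gibbs_allm:
  assumes hm: "hardcore_model V E lam"
  shows "hardcore_gibbs V E lam (allm V) > 0"
  using hc_Z_pos[OF hm] unfolding hardcore_gibbs_def gibbs_def
  by (simp add: allm_configs hc_allm)

lemma hc_B_pos:
  assumes hm: "hardcore_model V E lam" and v: "v \<in> V"
  shows "(\<Sum>\<sigma>\<in>{\<sigma>\<in>configs V. (\<forall>x\<in>{u\<in>V. E v u}. \<sigma> x = -1) \<and> \<sigma> v = -1}. hardcore_gibbs V E lam \<sigma>) > 0"
proof -
  have "hardcore_gibbs V E lam (allm V) \<le> (\<Sum>\<sigma>\<in>{\<sigma>\<in>configs V. (\<forall>x\<in>{u\<in>V. E v u}. \<sigma> x = -1) \<and> \<sigma> v = -1}. hardcore_gibbs V E lam \<sigma>)"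
    by (rule member_le_sum) (use hc_basic[OF hm] allm_configs v in \<open>auto simp: allm_def\<close>)
  then show ?thesis using hc_gibbs_allm[OF hm] by linarith
qed

lemma hc_part2_v:
  assumes hm1: "hardcore_model V E lam1" and hm2: "hardcore_model V E lam2" and b: "0 < b"
    and mb: "marg_bounded V (hardcore_gibbs V E lam1) b" and v: "v \<in> V" and le: "lam2 v \<le> lam1 v"
  shows "b^3 * (lam1 v - lam2 v) \<le> dtv V (hardcore_gibbs V E lam1) (hardcore_gibbs V E lam2)"
proof (cases "lam1 v = lam2 v")
  case True then show ?thesis using dtv_nonneg by simp
next
  case False
  let ?N = "{u\<in>V. E v u}"
  let ?B = "{\<sigma>\<in>configs V. (\<forall>x\<in>?N. \<sigma> x = -1) \<and> \<sigma> v = -1}"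
  let ?A = "{\<sigma>\<in>configs V. \<sigma> v = 1}"
  let ?S = "{\<sigma>\<in>configs V. \<forall>x\<in>?N. \<sigma> x = -1}"
  let ?m1 = "hardcore_gibbs V E lam1"
  let ?d = "dtv V ?m1 (hardcore_gibbs V E lam2)"
  define x where "x = (\<Sum>\<sigma>\<in>?B. ?m1 \<sigma>)"
  define a where "a = (\<Sum>\<sigma>\<in>?A. ?m1 \<sigma>)"
  define l1 where "l1 = lam1 v"
  define l2 where "l2 = lam2 v"
  have sg: "simple_graph V E" using hm1 unfolding hardcore_model_def by auto
  have fin: "finite (configs V)" using hc_basic[OF hm1] by auto
  have l20: "l2 \<ge> 0" using hm2 v unfolding hardcore_model_def l2_def by auto
  have lt: "l2 < l1" using False le l1_def l2_def by simp
  have main: "(l1 - l2) * x \<le> (1 + l2) * ?d" unfolding l1_def l2_def x_def by (rule hc_main[OF hm1 hm2 v])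
  have iden: "a = l1 * x" unfolding a_def x_def l1_def by (rule hc_identity_gibbs[OF hm1 v])
  have xpos: "x > 0" unfolding x_def by (rule hc_B_pos[OF hm1 v])
  have apos: "a > 0" using iden xpos lt l20 by simp
  have tot: "(\<Sum>\<sigma>\<in>configs V. ?m1 \<sigma>) = 1" using hc_basic[OF hm1] by auto
  have ab: "a \<ge> b"
  proof -
    have "let p = prob_ev V ?m1 (\<lambda>\<tau>. (\<forall>u\<in>{}. \<tau> u = allm V u) \<and> \<tau> v = 1)
                 / prob_ev V ?m1 (\<lambda>\<tau>. \<forall>u\<in>{}. \<tau> u = allm V u)
         in p > 0 \<longrightarrow> p \<ge> b"
      using mb[unfolded marg_bounded_def, rule_format, of "{}" "allm V" v 1] v tot
      by (simp add: prob_ev_def)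
    then show ?thesis using apos tot unfolding a_def by (simp add: prob_ev_def Let_def)
  qed
  have S_split: "(\<Sum>\<sigma>\<in>?S. ?m1 \<sigma>) = x + a"
  proof -
    have sp: "?S = ?B \<union> {\<sigma>\<in>configs V. (\<forall>x\<in>?N. \<sigma> x = -1) \<and> \<sigma> v = 1}"
      using v unfolding configs_def by auto
    have "(\<Sum>\<sigma>\<in>?S. ?m1 \<sigma>) = x + (\<Sum>\<sigma>\<in>{\<sigma>\<in>configs V. (\<forall>x\<in>?N. \<sigma> x = -1) \<and> \<sigma> v = 1}. ?m1 \<sigma>)"
      unfolding x_def sp by (rule sum.union_disjoint) (use fin in auto)
    also have "(\<Sum>\<sigma>\<in>{\<sigma>\<in>configs V. (\<forall>x\<in>?N. \<sigma> x = -1) \<and> \<sigma> v = 1}. ?m1 \<sigma>) = a"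
      unfolding a_def
    proof (rule sum.mono_neutral_left)
      show "finite ?A" using fin by auto
      show "{\<sigma>\<in>configs V. (\<forall>x\<in>?N. \<sigma> x = -1) \<and> \<sigma> v = 1} \<subseteq> ?A" by auto
      show "\<forall>i\<in>?A - {\<sigma>\<in>configs V. (\<forall>x\<in>?N. \<sigma> x = -1) \<and> \<sigma> v = 1}. ?m1 i = 0"
      proof
        fix \<tau> assume t: "\<tau> \<in> ?A - {\<sigma>\<in>configs V. (\<forall>x\<in>?N. \<sigma> x = -1) \<and> \<sigma> v = 1}"
        then obtain y where y: "y \<in> V" "E v y" "\<tau> y \<noteq> -1" by auto
        then have "\<tau> y = 1" using t configs_val[of \<tau> V y] by auto
        then have "\<exists>a\<in>V. \<exists>b\<in>V. E a b \<and> (\<tau> a = 1 \<and> \<tau> b = 1)" using y v t by blast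
        then have "hc_weight V E lam1 \<tau> = 0" unfolding hc_weight_def by auto
        then show "?m1 \<tau> = 0" unfolding hardcore_gibbs_def gibbs_def by simp
      qed
    qed
    finally show ?thesis .
  qed
  have xb: "x \<ge> b * (x + a)"
  proof -
    have NV: "?N \<subseteq> V" by auto
    have e1: "{\<tau>\<in>configs V. \<forall>u\<in>?N. \<tau> u = allm V u} = ?S" using allm_minus[OF _ NV] by blast
    have e2: "{\<tau>\<in>configs V. (\<forall>u\<in>?N. \<tau> u = allm V u) \<and> \<tau> v = -1} = ?B" using allm_minus[OF _ NV] by blast
    have "let p = prob_ev V ?m1 (\<lambda>\<tau>. (\<forall>u\<in>?N. \<tau> u = allm V u) \<and> \<tau> v = -1)
                 / prob_ev V ?m1 (\<lambda>\<tau>. \<forall>u\<in>?N. \<tau> u = allm V u)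
         in p > 0 \<longrightarrow> p \<ge> b"
      using mb[unfolded marg_bounded_def, rule_format, of ?N "allm V" v "-1"] v S_split e1 xpos apos
      unfolding prob_ev_def by (auto simp: allm_def)
    then have "x / (x + a) > 0 \<longrightarrow> x / (x + a) \<ge> b" unfolding prob_ev_def e1 e2 S_split x_def Let_def .
    then have "x / (x + a) \<ge> b" using xpos apos by simp
    then show ?thesis using xpos apos by (simp add: le_divide_eq)
  qed
  have x2: "x \<ge> b^2"
  proof -
    have bb: "b * b \<le> b * a" using ab b by simp
    have "b * a \<le> b * (x + a)" using b xpos by (intro mult_left_mono) auto
    then show ?thesis using xb bb unfolding power2_eq_square by linarith
  qed
  have b1: "b * (1 + l2) \<le> 1"
  proof -
    have "l2 * x \<le> l1 * x" using lt xpos by simp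
    then have "(1 + l2) * x \<le> x + a" using iden by (simp add: algebra_simps)
    then have "b * ((1 + l2) * x) \<le> x" using xb b by (smt (verit) mult_left_mono)
    then have "(b * (1 + l2)) * x \<le> 1 * x" by (simp add: algebra_simps)
    then show ?thesis using xpos by simp
  qed
  have d0: "?d \<ge> 0" by (rule dtv_nonneg)
  have "b * ((l1 - l2) * x) \<le> b * ((1 + l2) * ?d)" using main b by simp
  also have "\<dots> = (b * (1 + l2)) * ?d" by simp
  also have "\<dots> \<le> 1 * ?d" by (rule mult_right_mono[OF b1 d0])
  finally have f1: "b * (l1 - l2) * x \<le> ?d" by (simp add: algebra_simps)
  have "b^3 * (l1 - l2) = b * (l1 - l2) * b^2" by (simp add: power2_eq_square power3_eq_cube)
  also have "\<dots> \<le> b * (l1 - l2) * x" by (rule mult_left_mono[OF x2]) (use b lt in simp)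
  finally show ?thesis using f1 unfolding l1_def l2_def by simp
qed

lemma deg_le_max: "finite V \<Longrightarrow> v \<in> V \<Longrightarrow> deg V E v \<le> max_deg V E"
  unfolding max_deg_def by (rule Max_ge) auto

lemma hc_part1_v:
  assumes hm1: "hardcore_model V E lam1" and hm2: "hardcore_model V E lam2" and v: "v \<in> V"
    and D3: "max_deg V E \<ge> 3"
    and bnd1: "\<forall>u\<in>V. lam1 u \<le> lambda_c (max_deg V E)" and bnd2: "\<forall>u\<in>V. lam2 u \<le> lambda_c (max_deg V E)"
  shows "lam1 v - lam2 v \<le> 5000 * dtv V (hardcore_gibbs V E lam1) (hardcore_gibbs V E lam2)"
proof (cases "lam1 v \<le> lam2 v")
  case True then show ?thesis using dtv_nonneg[of V "hardcore_gibbs V E lam1" "hardcore_gibbs V E lam2"] by simp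
next
  case False
  let ?N = "{u\<in>V. E v u}"
  let ?B = "{\<sigma>\<in>configs V. (\<forall>x\<in>?N. \<sigma> x = -1) \<and> \<sigma> v = -1}"
  let ?m1 = "hardcore_gibbs V E lam1"
  let ?d = "dtv V ?m1 (hardcore_gibbs V E lam2)"
  let ?Lc = "lambda_c (max_deg V E)"
  let ?D = "max_deg V E"
  define x where "x = (\<Sum>\<sigma>\<in>?B. ?m1 \<sigma>)"
  define Z where "Z = (\<Sum>\<sigma>\<in>configs V. hc_weight V E lam1 \<sigma>)"
  define ZB where "ZB = (\<Sum>\<sigma>\<in>?B. hc_weight V E lam1 \<sigma>)"
  define P where "P = (1 + ?Lc) ^ (?D + 1)"
  have sg: "simple_graph V E" using hm1 unfolding hardcore_model_def by auto
  have fV: "finite V" using sg_finite[OF sg] .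
  have lcb: "(1 + ?Lc) ^ (?D+2) \<le> 5000" and lc0: "?Lc \<ge> 0" using lc_bound[OF D3] by auto
  have Z1: "Z \<ge> 1" unfolding Z_def by (rule hc_Z_pos[OF hm1])
  have xe: "x = ZB / Z" unfolding x_def ZB_def Z_def by (rule hc_basic(4)[OF hm1]) auto
  have Bset: "{\<sigma>\<in>configs V. \<forall>x\<in>insert v ?N. \<sigma> x = -1} = ?B" by auto
  have zb: "Z \<le> (\<Prod>u\<in>insert v ?N. 1 + lam1 u) * ZB"
    using hc_Z_bound[OF hm1, of "insert v ?N"] v unfolding Bset Z_def ZB_def by auto
  have vN: "v \<notin> ?N" using sg unfolding simple_graph_def by auto
  have cardN: "card (insert v ?N) = deg V E v + 1" using vN fV unfolding deg_def by simp
  have "(\<Prod>u\<in>insert v ?N. 1 + lam1 u) \<le> (\<Prod>u\<in>insert v ?N. 1 + ?Lc)"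
    by (rule prod_mono) (use hm1 bnd1 v in \<open>auto simp: hardcore_model_def\<close>)
  also have "\<dots> = (1 + ?Lc) ^ (deg V E v + 1)" using cardN by simp
  also have "\<dots> \<le> P" unfolding P_def by (rule power_increasing) (use deg_le_max[OF fV v, of E] lc0 in auto)
  finally have pr: "(\<Prod>u\<in>insert v ?N. 1 + lam1 u) \<le> P" .
  have ZB0: "ZB \<ge> 0" unfolding ZB_def by (rule sum_nonneg) (use hc_nonneg[OF hm1] in auto)
  have zpz: "Z \<le> P * ZB" using zb mult_right_mono[OF pr ZB0] by linarith
  have zbx: "ZB = Z * x" using xe Z1 by simp
  have "Z * 1 \<le> Z * (x * P)" using zpz zbx by (simp add: algebra_simps)
  then have xP: "x * P \<ge> 1" using Z1 by (simp add: mult_le_cancel_left_pos)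
  have main: "(lam1 v - lam2 v) * x \<le> (1 + lam2 v) * ?d" unfolding x_def by (rule hc_main[OF hm1 hm2 v])
  have d0: "?d \<ge> 0" by (rule dtv_nonneg)
  have "(1 + lam2 v) * ?d \<le> (1 + ?Lc) * ?d" by (rule mult_right_mono) (use bnd2 v d0 in auto)
  with main have m2: "(lam1 v - lam2 v) * x \<le> (1 + ?Lc) * ?d" by linarith
  have P0: "P \<ge> 0" unfolding P_def using lc0 by simp
  have "lam1 v - lam2 v \<le> (lam1 v - lam2 v) * (x * P)" using xP False by (simp add: mult_le_cancel_left1)
  also have "\<dots> = ((lam1 v - lam2 v) * x) * P" by simp
  also have "\<dots> \<le> ((1 + ?Lc) * ?d) * P" by (rule mult_right_mono[OF m2 P0])
  also have "\<dots> = (1 + ?Lc) ^ (?D+2) * ?d" unfolding P_def by simp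
  also have "\<dots> \<le> 5000 * ?d" by (rule mult_right_mono[OF lcb d0])
  finally show ?thesis .
qed




definition flp :: "'v \<Rightarrow> ('v \<Rightarrow> int) \<Rightarrow> ('v \<Rightarrow> int)" where "flp v \<sigma> = \<sigma>(v := - \<sigma> v)"

definition Lf :: "'v set \<Rightarrow> ('v \<Rightarrow> 'v \<Rightarrow> bool) \<Rightarrow> ('v \<Rightarrow> 'v \<Rightarrow> real) \<Rightarrow> ('v \<Rightarrow> real) \<Rightarrow> 'v \<Rightarrow> ('v \<Rightarrow> int) \<Rightarrow> real"
  where "Lf V E J h v \<sigma> = h v + (\<Sum>x\<in>{u\<in>V. E v u}. J v x * of_int (\<sigma> x))"

lemma flp_configs: "\<sigma> \<in> configs V \<Longrightarrow> v \<in> V \<Longrightarrow> flp v \<sigma> \<in> configs V"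
  unfolding flp_def configs_def by auto

lemma flp_flp[simp]: "flp v (flp v \<sigma>) = \<sigma>" unfolding flp_def by auto

lemma flp_apply: "flp v \<sigma> x = (if x = v then - \<sigma> v else \<sigma> x)" unfolding flp_def by auto

lemma sum_flp:
  assumes v: "v \<in> V"
  shows "(\<Sum>\<sigma>\<in>configs V. g (flp v \<sigma>)) = (\<Sum>\<sigma>\<in>configs V. g \<sigma>)"
  by (rule sum.reindex_bij_witness[where i="flp v" and j="flp v"]) (use v flp_configs in auto)

lemma configs_sq: "\<sigma> \<in> configs V \<Longrightarrow> v \<in> V \<Longrightarrow> real_of_int (\<sigma> v) * real_of_int (\<sigma> v) = 1"
  unfolding configs_def by auto

lemma configs_abs: "\<sigma> \<in> configs V \<Longrightarrow> v \<in> V \<Longrightarrow> \<bar>real_of_int (\<sigma> v)\<bar> = 1"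
  unfolding configs_def by auto

lemma Lf_flp:
  assumes sg: "simple_graph V E"
  shows "Lf V E J h v (flp v \<sigma>) = Lf V E J h v \<sigma>"
proof -
  have "\<forall>x\<in>{u\<in>V. E v u}. x \<noteq> v" using sg unfolding simple_graph_def by auto
  then show ?thesis unfolding Lf_def by (auto simp: flp_apply intro!: sum.cong)
qed

lemma Lf_flp_u:
  assumes sg: "simple_graph V E" and u: "u \<in> V" "E v u"
  shows "Lf V E J h v \<sigma> - Lf V E J h v (flp u \<sigma>) = 2 * J v u * of_int (\<sigma> u)"
proof -
  have fin: "finite {x\<in>V. E v x}" using sg_finite[OF sg] by auto
  have "Lf V E J h v \<sigma> - Lf V E J h v (flp u \<sigma>) =
     (\<Sum>x\<in>{x\<in>V. E v x}. J v x * of_int (\<sigma> x) - J v x * of_int (flp u \<sigma> x))"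
    unfolding Lf_def by (simp add: sum_subtractf)
  also have "\<dots> = (\<Sum>x\<in>{x\<in>V. E v x}. if x = u then 2 * J v u * of_int (\<sigma> u) else 0)"
    by (rule sum.cong) (auto simp: flp_apply)
  also have "\<dots> = 2 * J v u * of_int (\<sigma> u)" using fin u by (simp add: sum.delta)
  finally show ?thesis .
qed

lemma ising_flip:
  assumes sg: "simple_graph V E" and Js: "\<forall>a b. J a b = J b a" and \<sigma>: "\<sigma> \<in> configs V" and v: "v \<in> V"
  shows "ising_weight V E J h \<sigma> = exp (2 * of_int (\<sigma> v) * Lf V E J h v \<sigma>) * ising_weight V E J h (flp v \<sigma>)"
proof -
  let ?r = "\<lambda>x. real_of_int (\<sigma> x)"
  let ?r' = "\<lambda>x. real_of_int (flp v \<sigma> x)"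
  let ?s = "?r v"
  let ?N = "\<lambda>u. {x\<in>V. E u x}"
  have fV: "finite V" using sg_finite[OF sg] .
  have ss: "?s * ?s = 1" using configs_sq[OF \<sigma> v] .
  have irr: "\<And>x. \<not> E x x" and Es: "\<And>a b. E a b \<Longrightarrow> E b a" using sg unfolding simple_graph_def by auto
  have r': "\<And>x. ?r' x = (if x = v then - ?s else ?r x)" by (simp add: flp_apply)
  have pw: "J u x * ?r u * ?r x - J u x * ?r' u * ?r' x
      = 2 * ?s * (if u = v then J v x * ?r x else 0) + 2 * ?s * (if x = v then J u v * ?r u else 0)"
    if "u \<in> V" "x \<in> ?N u" for u x
  proof -
    have ux: "u \<noteq> x" using that irr by auto
    show ?thesis
    proof (cases "u = v")
      case True
      then have "x \<noteq> v" using ux by auto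
      then show ?thesis using True r' by (simp add: algebra_simps)
    next
      case False
      then show ?thesis using r' by (cases "x = v") (auto simp: algebra_simps)
    qed
  qed
  define S where "S = (\<Sum>x\<in>?N v. J v x * ?r x)"
  have s1: "(\<Sum>u\<in>V. \<Sum>x\<in>?N u. (if u = v then J v x * ?r x else 0)) = S"
  proof -
    have "(\<Sum>u\<in>V. \<Sum>x\<in>?N u. (if u = v then J v x * ?r x else 0)) = (\<Sum>u\<in>V. if u = v then S else 0)"
      by (rule sum.cong) (auto simp: S_def)
    then show ?thesis using fV v by (simp add: sum.delta)
  qed
  have s2: "(\<Sum>u\<in>V. \<Sum>x\<in>?N u. (if x = v then J u v * ?r u else 0)) = S"
  proof -
    have "(\<Sum>u\<in>V. \<Sum>x\<in>?N u. (if x = v then J u v * ?r u else 0)) = (\<Sum>u\<in>V. if E v u then J v u * ?r u else 0)"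
    proof (rule sum.cong[OF refl])
      fix u assume "u \<in> V"
      have "(\<Sum>x\<in>?N u. (if x = v then J u v * ?r u else 0)) = (if v \<in> ?N u then J u v * ?r u else 0)"
        using fV by (simp add: sum.delta')
      then show "(\<Sum>x\<in>?N u. (if x = v then J u v * ?r u else 0)) = (if E v u then J v u * ?r u else 0)"
        using v Es Js by auto
    qed
    also have "\<dots> = S" unfolding S_def using fV by (simp add: sum.inter_filter)
    finally show ?thesis .
  qed
  have dbl: "(\<Sum>u\<in>V. \<Sum>x\<in>?N u. J u x * ?r u * ?r x) - (\<Sum>u\<in>V. \<Sum>x\<in>?N u. J u x * ?r' u * ?r' x)
     = 4 * ?s * S"
  proof -
    have "(\<Sum>u\<in>V. \<Sum>x\<in>?N u. J u x * ?r u * ?r x) - (\<Sum>u\<in>V. \<Sum>x\<in>?N u. J u x * ?r' u * ?r' x)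
       = (\<Sum>u\<in>V. \<Sum>x\<in>?N u. J u x * ?r u * ?r x - J u x * ?r' u * ?r' x)"
      by (simp add: sum_subtractf)
    also have "\<dots> = (\<Sum>u\<in>V. \<Sum>x\<in>?N u. 2 * ?s * (if u = v then J v x * ?r x else 0) + 2 * ?s * (if x = v then J u v * ?r u else 0))"
      by (intro sum.cong refl pw) auto
    also have "\<dots> = 2 * ?s * (\<Sum>u\<in>V. \<Sum>x\<in>?N u. (if u = v then J v x * ?r x else 0))
                 + 2 * ?s * (\<Sum>u\<in>V. \<Sum>x\<in>?N u. (if x = v then J u v * ?r u else 0))"
      by (simp add: sum.distrib sum_distrib_left)
    finally show ?thesis using s1 s2 by simp
  qed
  have hp: "(\<Sum>u\<in>V. h u * ?r u) - (\<Sum>u\<in>V. h u * ?r' u) = 2 * ?s * h v"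
  proof -
    have "(\<Sum>u\<in>V. h u * ?r u) - (\<Sum>u\<in>V. h u * ?r' u) = (\<Sum>u\<in>V. h u * ?r u - h u * ?r' u)"
      by (simp add: sum_subtractf)
    also have "\<dots> = (\<Sum>u\<in>V. if u = v then 2 * ?s * h v else 0)"
      by (rule sum.cong) (auto simp: r')
    also have "\<dots> = 2 * ?s * h v" using fV v by (simp add: sum.delta)
    finally show ?thesis .
  qed
  define Q where "Q = (\<lambda>\<tau>::'a \<Rightarrow> int. (\<Sum>u\<in>V. \<Sum>x\<in>?N u. J u x * real_of_int (\<tau> u) * real_of_int (\<tau> x)) / 2
          + (\<Sum>u\<in>V. h u * real_of_int (\<tau> u)))"
  have "Q \<sigma> - Q (flp v \<sigma>) = 2 * ?s * Lf V E J h v \<sigma>"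
    unfolding Q_def Lf_def using dbl hp unfolding S_def by (simp add: algebra_simps)
  then have "Q \<sigma> = 2 * ?s * Lf V E J h v \<sigma> + Q (flp v \<sigma>)" by simp
  then show ?thesis unfolding ising_weight_def Q_def by (simp add: exp_add)
qed




lemma is_basic:
  assumes sm: "soft_ising_model V E J h"
  shows "finite (configs V)" "(\<Sum>\<tau>\<in>configs V. ising_weight V E J h \<tau>) > 0"
    "\<And>\<sigma>. \<sigma> \<in> configs V \<Longrightarrow> ising_gibbs V E J h \<sigma> = ising_weight V E J h \<sigma> / (\<Sum>\<tau>\<in>configs V. ising_weight V E J h \<tau>)"
    "\<And>\<sigma>. \<sigma> \<in> configs V \<Longrightarrow> ising_gibbs V E J h \<sigma> > 0"
    "(\<Sum>\<sigma>\<in>configs V. ising_gibbs V E J h \<sigma>) = 1"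
    "\<And>\<sigma>. ising_gibbs V E J h \<sigma> \<ge> 0"
proof -
  have sg: "simple_graph V E" using sm unfolding soft_ising_model_def by auto
  show fin: "finite (configs V)" using configs_finite sg_finite[OF sg] by blast
  show Z: "(\<Sum>\<tau>\<in>configs V. ising_weight V E J h \<tau>) > 0"
    by (rule sum_pos) (use fin allm_configs in \<open>auto simp: ising_weight_def\<close>)
  show "\<And>\<sigma>. \<sigma> \<in> configs V \<Longrightarrow> ising_gibbs V E J h \<sigma> = ising_weight V E J h \<sigma> / (\<Sum>\<tau>\<in>configs V. ising_weight V E J h \<tau>)"
    unfolding ising_gibbs_def gibbs_def by simp
  then show "\<And>\<sigma>. \<sigma> \<in> configs V \<Longrightarrow> ising_gibbs V E J h \<sigma> > 0"
    using Z by (simp add: ising_weight_def)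
  show "(\<Sum>\<sigma>\<in>configs V. ising_gibbs V E J h \<sigma>) = 1"
    unfolding ising_gibbs_def by (rule gibbs_total) (use Z in auto)
  show "\<And>\<sigma>. ising_gibbs V E J h \<sigma> \<ge> 0"
    unfolding ising_gibbs_def by (rule gibbs_nonneg) (simp add: ising_weight_def)
qed

lemma is_core:
  assumes sm: "soft_ising_model V E J h" and \<sigma>: "\<sigma> \<in> configs V" and v: "v \<in> V"
  shows "ising_gibbs V E J h \<sigma> * (1 - of_int (\<sigma> v) * tanh (Lf V E J h v \<sigma>))
       = ising_gibbs V E J h (flp v \<sigma>) * (1 + of_int (\<sigma> v) * tanh (Lf V E J h v \<sigma>))"
proof -
  have sg: "simple_graph V E" and Js: "\<forall>a b. J a b = J b a" using sm unfolding soft_ising_model_def by auto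
  let ?L = "Lf V E J h v \<sigma>"
  let ?Z = "(\<Sum>\<tau>\<in>configs V. ising_weight V E J h \<tau>)"
  let ?s = "real_of_int (\<sigma> v)"
  have wf: "ising_weight V E J h \<sigma> = exp (2 * ?s * ?L) * ising_weight V E J h (flp v \<sigma>)"
    by (rule ising_flip[OF sg Js \<sigma> v])
  have key: "exp (2 * ?s * ?L) * (1 - ?s * tanh ?L) = 1 + ?s * tanh ?L"
  proof -
    have t: "tanh ?L * (1 + exp (- 2 * ?L)) = 1 - exp (- 2 * ?L)"
    proof -
      define e where "e = exp (- 2 * ?L)"
      have e0: "1 + e \<noteq> 0" unfolding e_def by (smt (verit) exp_gt_zero)
      have "tanh ?L = (1 - e) / (1 + e)" unfolding e_def by (rule tanh_real_altdef)
      then have "tanh ?L * (1 + e) = 1 - e" using e0 by simp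
      then show ?thesis unfolding e_def .
    qed
    have e: "exp (2 * ?L) * exp (- 2 * ?L) = 1" by (simp add: exp_add[symmetric])
    have "\<sigma> v = 1 \<or> \<sigma> v = -1" using \<sigma> v unfolding configs_def by auto
    then show ?thesis
    proof
      assume s: "\<sigma> v = 1"
      have "exp (2 * ?L) * (1 - tanh ?L) = 1 + tanh ?L"
      proof -
        have "1 - tanh ?L = exp (- 2 * ?L) * (1 + tanh ?L)" using t by (simp add: algebra_simps)
        then have "exp (2 * ?L) * (1 - tanh ?L) = (exp (2 * ?L) * exp (- 2 * ?L)) * (1 + tanh ?L)" by simp
        then show ?thesis using e by simp
      qed
      then show ?thesis using s by simp
    next
      assume s: "\<sigma> v = -1"
      have "exp (- 2 * ?L) * (1 + tanh ?L) = 1 - tanh ?L" using t by (simp add: algebra_simps)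
      then show ?thesis using s by simp
    qed
  qed
  have m1: "ising_gibbs V E J h \<sigma> = ising_weight V E J h \<sigma> / ?Z" by (rule is_basic(3)[OF sm \<sigma>])
  have m2: "ising_gibbs V E J h (flp v \<sigma>) = ising_weight V E J h (flp v \<sigma>) / ?Z"
    by (rule is_basic(3)[OF sm flp_configs[OF \<sigma> v]])
  define A where "A = ising_weight V E J h (flp v \<sigma>) / ?Z"
  define X where "X = exp (2 * ?s * ?L)"
  have mE: "ising_gibbs V E J h \<sigma> = X * A" unfolding m1 wf A_def X_def by simp
  have "ising_gibbs V E J h \<sigma> * (1 - ?s * tanh ?L) = A * (X * (1 - ?s * tanh ?L))"
    unfolding mE by (simp only: mult.assoc mult.commute mult.left_commute)
  also have "\<dots> = A * (1 + ?s * tanh ?L)" unfolding X_def key ..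
  finally show ?thesis unfolding m2 A_def .
qed

lemma is_glauber:
  assumes sm: "soft_ising_model V E J h" and v: "v \<in> V"
    and f: "\<And>\<sigma>. \<sigma> \<in> configs V \<Longrightarrow> f (flp v \<sigma>) = f \<sigma>"
  shows "(\<Sum>\<sigma>\<in>configs V. ising_gibbs V E J h \<sigma> * of_int (\<sigma> v) * f \<sigma>)
       = (\<Sum>\<sigma>\<in>configs V. ising_gibbs V E J h \<sigma> * tanh (Lf V E J h v \<sigma>) * f \<sigma>)"
proof -
  have sg: "simple_graph V E" using sm unfolding soft_ising_model_def by auto
  let ?m = "ising_gibbs V E J h"
  define G where "G = (\<lambda>\<sigma>. ?m \<sigma> * (of_int (\<sigma> v) - tanh (Lf V E J h v \<sigma>)) * f \<sigma>)"
  have pair: "G \<sigma> + G (flp v \<sigma>) = 0" if \<sigma>: "\<sigma> \<in> configs V" for \<sigma>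
  proof -
    let ?s = "real_of_int (\<sigma> v)" and ?t = "tanh (Lf V E J h v \<sigma>)"
    have c: "?m \<sigma> * (1 - ?s * ?t) = ?m (flp v \<sigma>) * (1 + ?s * ?t)" by (rule is_core[OF sm \<sigma> v])
    have ss: "?s * ?s = 1" by (rule configs_sq[OF \<sigma> v])
    have fs: "real_of_int (flp v \<sigma> v) = - ?s" by (simp add: flp_apply)
    have "G \<sigma> + G (flp v \<sigma>) = f \<sigma> * (?m \<sigma> * (?s - ?t) - ?m (flp v \<sigma>) * (?s + ?t))"
      unfolding G_def using fs f[OF \<sigma>] Lf_flp[OF sg] by (simp add: algebra_simps)
    also have "?m \<sigma> * (?s - ?t) - ?m (flp v \<sigma>) * (?s + ?t) = ?s * (?m \<sigma> * (1 - ?s * ?t) - ?m (flp v \<sigma>) * (1 + ?s * ?t))"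
    proof -
      have "\<sigma> v = 1 \<or> \<sigma> v = -1" using \<sigma> v unfolding configs_def by auto
      then show ?thesis
      proof
        assume "\<sigma> v = 1" then show ?thesis by (simp add: algebra_simps)
      next
        assume "\<sigma> v = -1" then show ?thesis by (simp add: algebra_simps)
      qed
    qed
    finally show ?thesis using c by simp
  qed
  have "(\<Sum>\<sigma>\<in>configs V. G \<sigma>) = (\<Sum>\<sigma>\<in>configs V. G (flp v \<sigma>))" by (rule sum_flp[OF v, symmetric])
  then have "2 * (\<Sum>\<sigma>\<in>configs V. G \<sigma>) = (\<Sum>\<sigma>\<in>configs V. G \<sigma> + G (flp v \<sigma>))" by (simp add: sum.distrib)
  also have "\<dots> = 0" using pair by simp
  finally have "(\<Sum>\<sigma>\<in>configs V. G \<sigma>) = 0" by simp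
  then show ?thesis unfolding G_def by (simp add: algebra_simps sum_subtractf)
qed

lemma is_pair:
  assumes sm: "soft_ising_model V E J h" and mb: "marg_bounded V (ising_gibbs V E J h) b"
    and \<sigma>: "\<sigma> \<in> configs V" and v: "v \<in> V"
  shows "ising_gibbs V E J h \<sigma> \<ge> b * (ising_gibbs V E J h \<sigma> + ising_gibbs V E J h (flp v \<sigma>))"
proof -
  let ?m = "ising_gibbs V E J h"
  have s1: "{\<tau>\<in>configs V. \<forall>u\<in>V - {v}. \<tau> u = \<sigma> u} = {\<sigma>, flp v \<sigma>}"
  proof (intro equalityI subsetI)
    fix \<tau> assume t: "\<tau> \<in> {\<tau>\<in>configs V. \<forall>u\<in>V - {v}. \<tau> u = \<sigma> u}"
    have "\<tau> v = 1 \<or> \<tau> v = -1" using t v unfolding configs_def by auto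
    moreover have "\<sigma> v = 1 \<or> \<sigma> v = -1" using \<sigma> v unfolding configs_def by auto
    ultimately have "\<tau> v = \<sigma> v \<or> \<tau> v = - \<sigma> v" by auto
    then show "\<tau> \<in> {\<sigma>, flp v \<sigma>}"
    proof
      assume tv: "\<tau> v = \<sigma> v"
      have "\<tau> = \<sigma>"
      proof
        fix x show "\<tau> x = \<sigma> x" using t \<sigma> tv unfolding configs_def by (cases "x \<in> V"; cases "x = v") auto
      qed
      then show ?thesis by simp
    next
      assume tv: "\<tau> v = - \<sigma> v"
      have "\<tau> = flp v \<sigma>"
      proof
        fix x show "\<tau> x = flp v \<sigma> x" using t \<sigma> tv unfolding configs_def flp_apply by (cases "x \<in> V"; cases "x = v") auto
      qed
      then show ?thesis by simp
    qed
  qed (use \<sigma> flp_configs[OF \<sigma> v] in \<open>auto simp: flp_apply split: if_splits\<close>)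
  have s2: "{\<tau>\<in>configs V. (\<forall>u\<in>V - {v}. \<tau> u = \<sigma> u) \<and> \<tau> v = \<sigma> v} = {\<sigma>}"
  proof -
    have "{\<tau>\<in>configs V. (\<forall>u\<in>V - {v}. \<tau> u = \<sigma> u) \<and> \<tau> v = \<sigma> v} = {\<tau>\<in>{\<tau>\<in>configs V. \<forall>u\<in>V - {v}. \<tau> u = \<sigma> u}. \<tau> v = \<sigma> v}" by auto
    also have "\<dots> = {\<tau>\<in>{\<sigma>, flp v \<sigma>}. \<tau> v = \<sigma> v}" unfolding s1 ..
    also have "\<dots> = {\<sigma>}" using \<sigma> v by (auto simp: flp_apply configs_def)
    finally show ?thesis .
  qed
  have ne: "flp v \<sigma> \<noteq> \<sigma>"
  proof
    assume hh: "flp v \<sigma> = \<sigma>"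
    have "flp v \<sigma> v = - \<sigma> v" by (simp add: flp_apply)
    then have "- \<sigma> v = \<sigma> v" using hh by simp
    then show False using \<sigma> v unfolding configs_def by auto
  qed
  have p1: "?m \<sigma> > 0" and p2: "?m (flp v \<sigma>) > 0" using is_basic(4)[OF sm] \<sigma> flp_configs[OF \<sigma> v] by auto
  have pe1: "prob_ev V ?m (\<lambda>\<tau>. \<forall>u\<in>V - {v}. \<tau> u = \<sigma> u) = ?m \<sigma> + ?m (flp v \<sigma>)"
    unfolding prob_ev_def s1 using ne by simp
  have pe2: "prob_ev V ?m (\<lambda>\<tau>. (\<forall>u\<in>V - {v}. \<tau> u = \<sigma> u) \<and> \<tau> v = \<sigma> v) = ?m \<sigma>"
    unfolding prob_ev_def s2 by simp
  have "let p = prob_ev V ?m (\<lambda>\<tau>. (\<forall>u\<in>V - {v}. \<tau> u = \<sigma> u) \<and> \<tau> v = \<sigma> v)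
                 / prob_ev V ?m (\<lambda>\<tau>. \<forall>u\<in>V - {v}. \<tau> u = \<sigma> u)
         in p > 0 \<longrightarrow> p \<ge> b"
    using mb[unfolded marg_bounded_def, rule_format, of "V - {v}" \<sigma> v "\<sigma> v"] \<sigma> v pe1 p1 p2
    unfolding configs_def by auto
  then have "?m \<sigma> / (?m \<sigma> + ?m (flp v \<sigma>)) \<ge> b" unfolding pe1 pe2 Let_def using p1 p2 by simp
  then show ?thesis using p1 p2 by (simp add: le_divide_eq)
qed

lemma is_tanh_bound:
  assumes sm: "soft_ising_model V E J h" and mb: "marg_bounded V (ising_gibbs V E J h) b"
    and \<sigma>: "\<sigma> \<in> configs V" and v: "v \<in> V"
  shows "\<bar>tanh (Lf V E J h v \<sigma>)\<bar> \<le> 1 - 2 * b"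
proof -
  have sg: "simple_graph V E" using sm unfolding soft_ising_model_def by auto
  let ?m = "ising_gibbs V E J h"
  let ?s = "real_of_int (\<sigma> v)" and ?t = "tanh (Lf V E J h v \<sigma>)"
  let ?a = "?m \<sigma>" and ?c = "?m (flp v \<sigma>)"
  have c: "?a * (1 - ?s * ?t) = ?c * (1 + ?s * ?t)" by (rule is_core[OF sm \<sigma> v])
  have b1: "?a \<ge> b * (?a + ?c)" by (rule is_pair[OF sm mb \<sigma> v])
  have b2: "?c \<ge> b * (?c + ?a)" using is_pair[OF sm mb flp_configs[OF \<sigma> v] v] by simp
  have p1: "?a > 0" and p2: "?c > 0" using is_basic(4)[OF sm] \<sigma> flp_configs[OF \<sigma> v] by auto
  have e1: "2 * ?a = (1 + ?s * ?t) * (?a + ?c)" using c by (simp add: algebra_simps)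
  have e2: "2 * ?c = (1 - ?s * ?t) * (?a + ?c)" using c by (simp add: algebra_simps)
  have "2 * b * (?a + ?c) \<le> (1 + ?s * ?t) * (?a + ?c)" using b1 e1 by simp
  then have q1: "2 * b \<le> 1 + ?s * ?t" using p1 p2 by (simp add: mult_le_cancel_right_pos)
  have "2 * b * (?a + ?c) \<le> (1 - ?s * ?t) * (?a + ?c)" using b2 e2 by (simp add: algebra_simps)
  then have q2: "2 * b \<le> 1 - ?s * ?t" using p1 p2 by (simp add: mult_le_cancel_right_pos)
  have "\<bar>?s * ?t\<bar> = \<bar>?t\<bar>" using configs_abs[OF \<sigma> v] by (simp add: abs_mult)
  then show ?thesis using q1 q2 by linarith
qed

lemma tanh_lower:
  fixes x y c :: real
  assumes x: "\<bar>tanh x\<bar> \<le> c" and y: "\<bar>tanh y\<bar> \<le> c"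
  shows "(1 - c^2) * \<bar>x - y\<bar> \<le> \<bar>tanh x - tanh y\<bar>"
proof -
  have dtanh: "(tanh has_real_derivative 1 - tanh x ^ 2) (at x)" for x::real
    using has_field_derivative_tanh[OF cosh_real_nonzero[of x] DERIV_ident] by simp
  have gen: "(1 - c^2) * (q - p) \<le> tanh q - tanh p" if pq: "p < q" "\<bar>tanh p\<bar> \<le> c" "\<bar>tanh q\<bar> \<le> c" for p q :: real
  proof -
    obtain z where z: "p < z" "z < q" "tanh q - tanh p = (q - p) * (1 - tanh z ^ 2)"
      using MVT2[OF pq(1), of tanh "\<lambda>z. 1 - tanh z ^ 2"] dtanh by blast
    have a1: "tanh p < tanh z" and a2: "tanh z < tanh q" using z by auto
    have "\<bar>tanh z\<bar> \<le> c" using pq(2,3) a1 a2 unfolding abs_le_iff by linarith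
    then have "tanh z ^ 2 \<le> c ^ 2" by (metis abs_ge_zero power2_abs power_mono)
    then have "1 - c^2 \<le> 1 - tanh z ^ 2" by simp
    then show ?thesis using z(3) pq(1) by (simp add: mult_right_mono mult.commute)
  qed
  show ?thesis
  proof (cases x y rule: linorder_cases)
    case less
    have e1: "\<bar>x - y\<bar> = y - x" using less by simp
    have "tanh x < tanh y" using less by simp
    then have e2: "\<bar>tanh x - tanh y\<bar> = tanh y - tanh x" by simp
    show ?thesis unfolding e1 e2 using gen[OF less x y] .
  next
    case equal then show ?thesis by simp
  next
    case greater
    have e1: "\<bar>x - y\<bar> = x - y" using greater by simp
    have "tanh y < tanh x" using greater by simp
    then have e2: "\<bar>tanh x - tanh y\<bar> = tanh x - tanh y" by simp
    show ?thesis unfolding e1 e2 using gen[OF greater y x] .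
  qed
qed




lemma is_b_half:
  assumes sm: "soft_ising_model V E J h" and mb: "marg_bounded V (ising_gibbs V E J h) b" and v: "v \<in> V"
  shows "2 * b \<le> 1"
proof -
  let ?m = "ising_gibbs V E J h" and ?\<sigma> = "allm V"
  have \<sigma>: "?\<sigma> \<in> configs V" by (rule allm_configs)
  have b1: "?m ?\<sigma> \<ge> b * (?m ?\<sigma> + ?m (flp v ?\<sigma>))" by (rule is_pair[OF sm mb \<sigma> v])
  have b2: "?m (flp v ?\<sigma>) \<ge> b * (?m (flp v ?\<sigma>) + ?m ?\<sigma>)" using is_pair[OF sm mb flp_configs[OF \<sigma> v] v] by simp
  have p: "?m ?\<sigma> + ?m (flp v ?\<sigma>) > 0" using is_basic(4)[OF sm] \<sigma> flp_configs[OF \<sigma> v] by (simp add: add_pos_pos)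
  have "(2 * b) * (?m ?\<sigma> + ?m (flp v ?\<sigma>)) \<le> 1 * (?m ?\<sigma> + ?m (flp v ?\<sigma>))" using b1 b2 by (simp add: algebra_simps)
  then show ?thesis using p by (simp only: mult_le_cancel_right_pos)
qed

lemma is_vertex:
  assumes sm1: "soft_ising_model V E J1 h1" and sm2: "soft_ising_model V E J2 h2" and b: "0 < b"
    and mb1: "marg_bounded V (ising_gibbs V E J1 h1) b" and mb2: "marg_bounded V (ising_gibbs V E J2 h2) b"
    and v: "v \<in> V"
  shows "(\<forall>u\<in>V. E v u \<longrightarrow> \<bar>J1 v u - J2 v u\<bar> \<le> dtv V (ising_gibbs V E J1 h1) (ising_gibbs V E J2 h2) / b^2)
       \<and> \<bar>h1 v - h2 v\<bar> / (real (deg V E v) + 1) \<le> dtv V (ising_gibbs V E J1 h1) (ising_gibbs V E J2 h2) / b^2"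
proof -
  have sg: "simple_graph V E" using sm1 unfolding soft_ising_model_def by auto
  have fin: "finite (configs V)" using is_basic(1)[OF sm1] .
  have fV: "finite V" using sg_finite[OF sg] .
  let ?m1 = "ising_gibbs V E J1 h1" and ?m2 = "ising_gibbs V E J2 h2"
  let ?d = "dtv V ?m1 ?m2"
  let ?N = "{u\<in>V. E v u}"
  define L1 where "L1 = Lf V E J1 h1 v"
  define L2 where "L2 = Lf V E J2 h2 v"
  define X where "X = (\<lambda>\<sigma>. L1 \<sigma> - L2 \<sigma>)"
  define K where "K = (\<Sum>\<sigma>\<in>configs V. ?m1 \<sigma> * \<bar>X \<sigma>\<bar>)"
  have bh: "2 * b \<le> 1" by (rule is_b_half[OF sm1 mb1 v])
  have m1pos: "\<And>\<sigma>. ?m1 \<sigma> \<ge> 0" using is_basic(6)[OF sm1] .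
  have tot1: "(\<Sum>\<sigma>\<in>configs V. ?m1 \<sigma>) = 1" using is_basic(5)[OF sm1] .
  have K0: "K \<ge> 0" unfolding K_def by (rule sum_nonneg) (use m1pos in auto)
  have d0: "?d \<ge> 0" unfolding dtv_def by (simp add: sum_nonneg)
  have B: "K * (4 * b * (1 - b)) \<le> 4 * ?d"
  proof -
    define sg where "sg = (\<lambda>\<sigma>. sgn (tanh (L1 \<sigma>) - tanh (L2 \<sigma>)))"
    have inv: "\<And>\<sigma>. \<sigma> \<in> configs V \<Longrightarrow> sg (flp v \<sigma>) = sg \<sigma>"
      unfolding sg_def L1_def L2_def using Lf_flp[OF sg] by simp
    have G1: "(\<Sum>\<sigma>\<in>configs V. ?m1 \<sigma> * of_int (\<sigma> v) * sg \<sigma>) = (\<Sum>\<sigma>\<in>configs V. ?m1 \<sigma> * tanh (L1 \<sigma>) * sg \<sigma>)"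
      unfolding L1_def by (rule is_glauber[where f=sg, OF sm1 v inv])
    have G2: "(\<Sum>\<sigma>\<in>configs V. ?m2 \<sigma> * of_int (\<sigma> v) * sg \<sigma>) = (\<Sum>\<sigma>\<in>configs V. ?m2 \<sigma> * tanh (L2 \<sigma>) * sg \<sigma>)"
      unfolding L2_def by (rule is_glauber[where f=sg, OF sm2 v inv])
    define P where "P = (\<Sum>\<sigma>\<in>configs V. (?m1 \<sigma> - ?m2 \<sigma>) * (of_int (\<sigma> v) * sg \<sigma>))"
    define Q where "Q = (\<Sum>\<sigma>\<in>configs V. (?m1 \<sigma> - ?m2 \<sigma>) * (tanh (L2 \<sigma>) * sg \<sigma>))"
    have Pe: "P = (\<Sum>\<sigma>\<in>configs V. ?m1 \<sigma> * of_int (\<sigma> v) * sg \<sigma>) - (\<Sum>\<sigma>\<in>configs V. ?m2 \<sigma> * of_int (\<sigma> v) * sg \<sigma>)"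
      unfolding P_def by (simp add: sum_subtractf[symmetric] algebra_simps)
    have Qe: "Q = (\<Sum>\<sigma>\<in>configs V. ?m1 \<sigma> * tanh (L2 \<sigma>) * sg \<sigma>) - (\<Sum>\<sigma>\<in>configs V. ?m2 \<sigma> * tanh (L2 \<sigma>) * sg \<sigma>)"
      unfolding Q_def by (simp add: sum_subtractf[symmetric] algebra_simps)
    have Te: "(\<Sum>\<sigma>\<in>configs V. ?m1 \<sigma> * \<bar>tanh (L1 \<sigma>) - tanh (L2 \<sigma>)\<bar>)
        = (\<Sum>\<sigma>\<in>configs V. ?m1 \<sigma> * tanh (L1 \<sigma>) * sg \<sigma>) - (\<Sum>\<sigma>\<in>configs V. ?m1 \<sigma> * tanh (L2 \<sigma>) * sg \<sigma>)"
    proof -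
      have "(\<Sum>\<sigma>\<in>configs V. ?m1 \<sigma> * \<bar>tanh (L1 \<sigma>) - tanh (L2 \<sigma>)\<bar>)
          = (\<Sum>\<sigma>\<in>configs V. ?m1 \<sigma> * tanh (L1 \<sigma>) * sg \<sigma> - ?m1 \<sigma> * tanh (L2 \<sigma>) * sg \<sigma>)"
        by (rule sum.cong[OF refl]) (simp add: sg_def abs_sgn algebra_simps)
      then show ?thesis by (simp add: sum_subtractf)
    qed
    have Pb: "\<bar>P\<bar> \<le> 2 * ?d" unfolding P_def
    proof (rule dtv_test[OF fin])
      fix \<sigma> assume \<sigma>: "\<sigma> \<in> configs V"
      have "\<bar>sg \<sigma>\<bar> \<le> 1" unfolding sg_def by (simp add: abs_sgn_eq)
      then show "\<bar>of_int (\<sigma> v) * sg \<sigma>\<bar> \<le> 1" using configs_abs[OF \<sigma> v] by (simp add: abs_mult)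
    qed
    have Qb: "\<bar>Q\<bar> \<le> 2 * ?d" unfolding Q_def
    proof (rule dtv_test[OF fin])
      fix \<sigma> assume \<sigma>: "\<sigma> \<in> configs V"
      have "\<bar>sg \<sigma>\<bar> \<le> 1" unfolding sg_def by (simp add: abs_sgn_eq)
      moreover have "\<bar>tanh (L2 \<sigma>)\<bar> \<le> 1" using tanh_real_bounds[of "L2 \<sigma>"] by auto
      ultimately show "\<bar>tanh (L2 \<sigma>) * sg \<sigma>\<bar> \<le> 1" by (simp add: abs_mult mult_le_one)
    qed
    have T4: "(\<Sum>\<sigma>\<in>configs V. ?m1 \<sigma> * \<bar>tanh (L1 \<sigma>) - tanh (L2 \<sigma>)\<bar>) \<le> 4 * ?d"
      using Te Pe Qe G1 G2 Pb Qb by linarith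
    have "K * (4 * b * (1 - b)) = (\<Sum>\<sigma>\<in>configs V. ?m1 \<sigma> * ((4 * b * (1 - b)) * \<bar>X \<sigma>\<bar>))"
      unfolding K_def by (subst sum_distrib_right) (rule sum.cong[OF refl], simp add: mult_ac)
    also have "\<dots> \<le> (\<Sum>\<sigma>\<in>configs V. ?m1 \<sigma> * \<bar>tanh (L1 \<sigma>) - tanh (L2 \<sigma>)\<bar>)"
    proof (rule sum_mono)
      fix \<sigma> assume \<sigma>: "\<sigma> \<in> configs V"
      have t1: "\<bar>tanh (L1 \<sigma>)\<bar> \<le> 1 - 2 * b" unfolding L1_def by (rule is_tanh_bound[OF sm1 mb1 \<sigma> v])
      have t2: "\<bar>tanh (L2 \<sigma>)\<bar> \<le> 1 - 2 * b" unfolding L2_def by (rule is_tanh_bound[OF sm2 mb2 \<sigma> v])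
      have "(1 - (1 - 2 * b)^2) * \<bar>L1 \<sigma> - L2 \<sigma>\<bar> \<le> \<bar>tanh (L1 \<sigma>) - tanh (L2 \<sigma>)\<bar>"
        by (rule tanh_lower[OF t1 t2])
      moreover have "1 - (1 - 2 * b)^2 = 4 * b * (1 - b)" by (simp add: power2_eq_square algebra_simps)
      ultimately have "(4 * b * (1 - b)) * \<bar>X \<sigma>\<bar> \<le> \<bar>tanh (L1 \<sigma>) - tanh (L2 \<sigma>)\<bar>" unfolding X_def by simp
      then show "?m1 \<sigma> * ((4 * b * (1 - b)) * \<bar>X \<sigma>\<bar>) \<le> ?m1 \<sigma> * \<bar>tanh (L1 \<sigma>) - tanh (L2 \<sigma>)\<bar>"
        by (rule mult_left_mono) (use m1pos in auto)
    qed
    finally show ?thesis using T4 by linarith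
  qed
  have C: "2 * b * \<bar>J1 v u - J2 v u\<bar> \<le> K" if u: "u \<in> V" "E v u" for u
  proof -
    let ?c = "J1 v u - J2 v u"
    have Xd: "\<bar>X \<sigma> - X (flp u \<sigma>)\<bar> = 2 * \<bar>?c\<bar>" if \<sigma>: "\<sigma> \<in> configs V" for \<sigma>
    proof -
      have "X \<sigma> - X (flp u \<sigma>) = 2 * ?c * of_int (\<sigma> u)"
        unfolding X_def L1_def L2_def using Lf_flp_u[OF sg u, of J1 h1 \<sigma>] Lf_flp_u[OF sg u, of J2 h2 \<sigma>]
        by (simp add: algebra_simps)
      then have e: "\<bar>X \<sigma> - X (flp u \<sigma>)\<bar> = \<bar>2 * ?c\<bar> * \<bar>of_int (\<sigma> u)\<bar>" by (simp only: abs_mult)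
      have a: "\<bar>real_of_int (\<sigma> u)\<bar> = 1" using configs_abs[OF \<sigma> u(1)] .
      have b2: "\<bar>2 * ?c\<bar> = 2 * \<bar>?c\<bar>" by (simp only: abs_mult abs_numeral)
      show ?thesis by (simp only: e a b2 mult_1_right)
    qed
    have K2: "2 * K = (\<Sum>\<sigma>\<in>configs V. ?m1 \<sigma> * \<bar>X \<sigma>\<bar> + ?m1 (flp u \<sigma>) * \<bar>X (flp u \<sigma>)\<bar>)"
      unfolding K_def sum.distrib using sum_flp[OF u(1), of "\<lambda>\<sigma>. ?m1 \<sigma> * \<bar>X \<sigma>\<bar>"] by simp
    have "(\<Sum>\<sigma>\<in>configs V. (b * (?m1 \<sigma> + ?m1 (flp u \<sigma>))) * (2 * \<bar>?c\<bar>))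
        \<le> (\<Sum>\<sigma>\<in>configs V. ?m1 \<sigma> * \<bar>X \<sigma>\<bar> + ?m1 (flp u \<sigma>) * \<bar>X (flp u \<sigma>)\<bar>)"
    proof (rule sum_mono)
      fix \<sigma> assume \<sigma>: "\<sigma> \<in> configs V"
      let ?w = "b * (?m1 \<sigma> + ?m1 (flp u \<sigma>))"
      have p1: "?m1 \<sigma> \<ge> ?w" by (rule is_pair[OF sm1 mb1 \<sigma> u(1)])
      have p2: "?m1 (flp u \<sigma>) \<ge> ?w" using is_pair[OF sm1 mb1 flp_configs[OF \<sigma> u(1)] u(1)] by (simp add: algebra_simps)
      have "?w * (2 * \<bar>?c\<bar>) \<le> ?w * (\<bar>X \<sigma>\<bar> + \<bar>X (flp u \<sigma>)\<bar>)"
      proof (rule mult_left_mono)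
        show "2 * \<bar>?c\<bar> \<le> \<bar>X \<sigma>\<bar> + \<bar>X (flp u \<sigma>)\<bar>" using Xd[OF \<sigma>] by linarith
        show "0 \<le> ?w" using b m1pos by (simp add: add_nonneg_nonneg)
      qed
      also have "\<dots> = ?w * \<bar>X \<sigma>\<bar> + ?w * \<bar>X (flp u \<sigma>)\<bar>" by (simp add: algebra_simps)
      also have "\<dots> \<le> ?m1 \<sigma> * \<bar>X \<sigma>\<bar> + ?m1 (flp u \<sigma>) * \<bar>X (flp u \<sigma>)\<bar>"
        by (intro add_mono mult_right_mono p1 p2) auto
      finally show "?w * (2 * \<bar>?c\<bar>) \<le> ?m1 \<sigma> * \<bar>X \<sigma>\<bar> + ?m1 (flp u \<sigma>) * \<bar>X (flp u \<sigma>)\<bar>" .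
    qed
    moreover have "(\<Sum>\<sigma>\<in>configs V. (b * (?m1 \<sigma> + ?m1 (flp u \<sigma>))) * (2 * \<bar>?c\<bar>))
        = b * 2 * \<bar>?c\<bar> * ((\<Sum>\<sigma>\<in>configs V. ?m1 \<sigma>) + (\<Sum>\<sigma>\<in>configs V. ?m1 (flp u \<sigma>)))"
      by (simp add: sum.distrib sum_distrib_left sum_distrib_right algebra_simps)
    moreover have "(\<Sum>\<sigma>\<in>configs V. ?m1 (flp u \<sigma>)) = 1" using sum_flp[OF u(1), of ?m1] tot1 by simp
    ultimately have "b * 2 * \<bar>?c\<bar> * 2 \<le> 2 * K" using K2 tot1 by simp
    then show ?thesis by simp
  qed
  define Cs where "Cs = (\<Sum>x\<in>?N. \<bar>J1 v x - J2 v x\<bar>)"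
  have D: "\<bar>h1 v - h2 v\<bar> \<le> K + Cs"
  proof -
    have pw: "\<bar>h1 v - h2 v\<bar> \<le> \<bar>X \<sigma>\<bar> + Cs" if \<sigma>: "\<sigma> \<in> configs V" for \<sigma>
    proof -
      have "X \<sigma> = (h1 v - h2 v) + (\<Sum>x\<in>?N. (J1 v x - J2 v x) * of_int (\<sigma> x))"
        unfolding X_def L1_def L2_def Lf_def by (simp add: sum_subtractf[symmetric] algebra_simps)
      moreover have "\<bar>\<Sum>x\<in>?N. (J1 v x - J2 v x) * of_int (\<sigma> x)\<bar> \<le> Cs"
      proof -
        have "\<bar>\<Sum>x\<in>?N. (J1 v x - J2 v x) * of_int (\<sigma> x)\<bar> \<le> (\<Sum>x\<in>?N. \<bar>(J1 v x - J2 v x) * of_int (\<sigma> x)\<bar>)"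
          by (rule sum_abs)
        also have "\<dots> = Cs" unfolding Cs_def by (rule sum.cong) (use configs_abs[OF \<sigma>] in \<open>auto simp: abs_mult\<close>)
        finally show ?thesis .
      qed
      ultimately show ?thesis by linarith
    qed
    have "\<bar>h1 v - h2 v\<bar> = (\<Sum>\<sigma>\<in>configs V. ?m1 \<sigma> * \<bar>h1 v - h2 v\<bar>)" using tot1 by (simp add: sum_distrib_right[symmetric])
    also have "\<dots> \<le> (\<Sum>\<sigma>\<in>configs V. ?m1 \<sigma> * (\<bar>X \<sigma>\<bar> + Cs))"
      by (rule sum_mono, rule mult_left_mono) (use pw m1pos in auto)
    also have "\<dots> = K + Cs" unfolding K_def using tot1 by (simp add: algebra_simps sum.distrib sum_distrib_right[symmetric] sum_distrib_left[symmetric])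
    finally show ?thesis .
  qed
  define R where "R = K / (2 * b)"
  have KR: "K \<le> R"
  proof -
    have "K * (2 * b) \<le> K * 1" by (rule mult_left_mono) (use bh K0 in auto)
    then show ?thesis unfolding R_def using b by (simp add: le_divide_eq)
  qed
  have Rd: "R \<le> ?d / b^2"
  proof -
    have "K * b \<le> 2 * ?d"
    proof -
      have "K * (4 * b * (1/2)) \<le> K * (4 * b * (1 - b))" by (rule mult_left_mono) (use K0 bh b in auto)
      then show ?thesis using B by simp
    qed
    then show ?thesis unfolding R_def using b by (simp add: field_simps power2_eq_square)
  qed
  have cu: "\<bar>J1 v u - J2 v u\<bar> \<le> R" if "u \<in> V" "E v u" for u
    unfolding R_def using C[OF that] b by (simp add: le_divide_eq mult.commute)
  have Csb: "Cs \<le> real (deg V E v) * R"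
  proof -
    have "Cs \<le> of_nat (card ?N) * R" unfolding Cs_def by (rule sum_bounded_above) (use cu in auto)
    then show ?thesis unfolding deg_def by simp
  qed
  have "\<bar>h1 v - h2 v\<bar> \<le> (real (deg V E v) + 1) * R" using D Csb KR by (simp add: algebra_simps)
  then have hR: "\<bar>h1 v - h2 v\<bar> / (real (deg V E v) + 1) \<le> R" by (simp add: divide_le_eq mult.commute)
  show ?thesis using cu hR Rd by (meson order.trans)
qed




lemma Max_mult_le:
  fixes f :: "'a \<Rightarrow> real"
  assumes "finite S" "c \<ge> 0" "d \<ge> 0" "\<forall>x\<in>S. c * f x \<le> d"
  shows "c * Max (insert 0 (f ` S)) \<le> d"
proof -
  have "Max (insert 0 (f ` S)) \<in> insert 0 (f ` S)" by (rule Max_in) (use assms in auto)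
  then show ?thesis using assms by auto
qed

lemma uniq_bound:
  assumes u: "uniqueness V E lam" and D: "max_deg V E \<ge> 3"
  shows "\<forall>x\<in>V. lam x \<le> lambda_c (max_deg V E)"
proof -
  obtain \<eta> :: real where e: "0 < \<eta>" "\<eta> < 1" "\<forall>v\<in>V. lam v \<le> (1 - \<eta>) * lambda_c (max_deg V E)"
    using u unfolding uniqueness_def by auto
  have l0: "lambda_c (max_deg V E) \<ge> 0" using lc_bound[OF D] by auto
  have "\<eta> * lambda_c (max_deg V E) \<ge> 0" using l0 e by simp
  then have "(1 - \<eta>) * lambda_c (max_deg V E) \<le> lambda_c (max_deg V E)" by (simp add: algebra_simps)
  then show ?thesis using e by fastforce
qed

lemma part1:
  assumes hm1: "hardcore_model V E lam1" and hm2: "hardcore_model V E lam2" and D: "max_deg V E \<ge> 3"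
    and u1: "uniqueness V E lam1" and u2: "uniqueness V E lam2"
  shows "dtv V (hardcore_gibbs V E lam1) (hardcore_gibbs V E lam2) \<ge> (1/5000) * dpar_hc V lam1 lam2"
proof -
  let ?d = "dtv V (hardcore_gibbs V E lam1) (hardcore_gibbs V E lam2)"
  have fV: "finite V" using hm1 sg_finite unfolding hardcore_model_def by blast
  have b1: "\<forall>x\<in>V. lam1 x \<le> lambda_c (max_deg V E)" by (rule uniq_bound[OF u1 D])
  have b2: "\<forall>x\<in>V. lam2 x \<le> lambda_c (max_deg V E)" by (rule uniq_bound[OF u2 D])
  have "\<forall>v\<in>V. (1/5000) * \<bar>lam1 v - lam2 v\<bar> \<le> ?d"
  proof
    fix v assume v: "v \<in> V"
    have "lam1 v - lam2 v \<le> 5000 * ?d" by (rule hc_part1_v[OF hm1 hm2 v D b1 b2])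
    moreover have "lam2 v - lam1 v \<le> 5000 * ?d"
      using hc_part1_v[OF hm2 hm1 v D b2 b1] dtv_sym[of V "hardcore_gibbs V E lam2"] by simp
    ultimately show "(1/5000) * \<bar>lam1 v - lam2 v\<bar> \<le> ?d" by simp
  qed
  then show ?thesis unfolding dpar_hc_def by (intro Max_mult_le) (use fV dtv_nonneg in auto)
qed

lemma part2:
  assumes hm1: "hardcore_model V E lam1" and hm2: "hardcore_model V E lam2" and b: "0 < b"
    and mb1: "marg_bounded V (hardcore_gibbs V E lam1) b" and mb2: "marg_bounded V (hardcore_gibbs V E lam2) b"
  shows "dtv V (hardcore_gibbs V E lam1) (hardcore_gibbs V E lam2) \<ge> b ^ 3 * dpar_hc V lam1 lam2"
proof -
  let ?d = "dtv V (hardcore_gibbs V E lam1) (hardcore_gibbs V E lam2)"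
  have fV: "finite V" using hm1 sg_finite unfolding hardcore_model_def by blast
  have "\<forall>v\<in>V. b^3 * \<bar>lam1 v - lam2 v\<bar> \<le> ?d"
  proof
    fix v assume v: "v \<in> V"
    show "b^3 * \<bar>lam1 v - lam2 v\<bar> \<le> ?d"
    proof (cases "lam2 v \<le> lam1 v")
      case True
      then show ?thesis using hc_part2_v[OF hm1 hm2 b mb1 v True] by simp
    next
      case False
      then have "lam1 v \<le> lam2 v" by simp
      from hc_part2_v[OF hm2 hm1 b mb2 v this] show ?thesis
        using False dtv_sym[of V "hardcore_gibbs V E lam2"] by simp
    qed
  qed
  then show ?thesis unfolding dpar_hc_def by (intro Max_mult_le) (use fV dtv_nonneg b in auto)
qed

lemma part3:
  assumes sm1: "soft_ising_model V E J1 h1" and sm2: "soft_ising_model V E J2 h2" and b: "0 < b"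
    and mb1: "marg_bounded V (ising_gibbs V E J1 h1) b" and mb2: "marg_bounded V (ising_gibbs V E J2 h2) b"
  shows "dtv V (ising_gibbs V E J1 h1) (ising_gibbs V E J2 h2) \<ge> b ^ 2 / 2 * dpar_ising V E J1 h1 J2 h2"
proof -
  let ?d = "dtv V (ising_gibbs V E J1 h1) (ising_gibbs V E J2 h2)"
  have fV: "finite V" using sm1 sg_finite unfolding soft_ising_model_def by blast
  have d0: "?d \<ge> 0" by (rule dtv_nonneg)
  have c0: "b^2/2 \<ge> 0" by simp
  have conv: "b^2/2 * y \<le> ?d" if "y \<le> ?d / b^2" for y
  proof -
    have "b^2/2 * y \<le> b^2/2 * (?d / b^2)" by (rule mult_left_mono[OF that c0])
    also have "\<dots> = ?d / 2" using b by simp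
    finally show ?thesis using d0 by linarith
  qed
  have J: "b^2/2 * Max (insert 0 ((\<lambda>(u,v). \<bar>J1 u v - J2 u v\<bar>) ` (V \<times> V))) \<le> ?d"
  proof (rule Max_mult_le)
    show "finite (V \<times> V)" using fV by simp
    show "\<forall>x\<in>V \<times> V. b\<^sup>2 / 2 * (case x of (u, v) \<Rightarrow> \<bar>J1 u v - J2 u v\<bar>) \<le> ?d"
    proof
      fix x assume x: "x \<in> V \<times> V"
      then obtain p q where pq: "x = (p, q)" "p \<in> V" "q \<in> V" by auto
      show "b\<^sup>2 / 2 * (case x of (u, v) \<Rightarrow> \<bar>J1 u v - J2 u v\<bar>) \<le> ?d"
      proof (cases "E p q")
        case True
        then have "\<bar>J1 p q - J2 p q\<bar> \<le> ?d / b^2" using is_vertex[OF sm1 sm2 b mb1 mb2 pq(2)] pq(3) by auto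
        then show ?thesis using pq conv by simp
      next
        case False
        then have "J1 p q = 0" "J2 p q = 0" using sm1 sm2 unfolding soft_ising_model_def by auto
        then show ?thesis using pq d0 by simp
      qed
    qed
  qed (use d0 in auto)
  have H: "b^2/2 * Max (insert 0 ((\<lambda>v. \<bar>h1 v - h2 v\<bar> / (real (deg V E v) + 1)) ` V)) \<le> ?d"
  proof (rule Max_mult_le)
    show "\<forall>x\<in>V. b\<^sup>2 / 2 * (\<bar>h1 x - h2 x\<bar> / (real (deg V E x) + 1)) \<le> ?d"
      using is_vertex[OF sm1 sm2 b mb1 mb2] conv by blast
  qed (use fV d0 in auto)
  show ?thesis unfolding dpar_ising_def using J H by (simp add: max_def)
qed

theorem lemma2p2:
  fixes V :: "'v set" and E :: "'v \<Rightarrow> 'v \<Rightarrow> bool"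
  shows
   "(\<forall>lam1 lam2. hardcore_model V E lam1 \<and> hardcore_model V E lam2 \<and> max_deg V E \<ge> 3
       \<and> uniqueness V E lam1 \<and> uniqueness V E lam2 \<longrightarrow>
       dtv V (hardcore_gibbs V E lam1) (hardcore_gibbs V E lam2) \<ge> (1/5000) * dpar_hc V lam1 lam2)
  \<and> (\<forall>lam1 lam2 b. hardcore_model V E lam1 \<and> hardcore_model V E lam2 \<and> 0 < b \<and> b < 1
       \<and> marg_bounded V (hardcore_gibbs V E lam1) b \<and> marg_bounded V (hardcore_gibbs V E lam2) b \<longrightarrow>
       dtv V (hardcore_gibbs V E lam1) (hardcore_gibbs V E lam2) \<ge> b ^ 3 * dpar_hc V lam1 lam2)
  \<and> (\<forall>J1 h1 J2 h2 b. soft_ising_model V E J1 h1 \<and> soft_ising_model V E J2 h2 \<and> 0 < b \<and> b < 1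
       \<and> marg_bounded V (ising_gibbs V E J1 h1) b \<and> marg_bounded V (ising_gibbs V E J2 h2) b \<longrightarrow>
       dtv V (ising_gibbs V E J1 h1) (ising_gibbs V E J2 h2) \<ge> b ^ 2 / 2 * dpar_ising V E J1 h1 J2 h2)"
  using part1 part2 part3 by blast


end
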